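(* Let $(T,\rho,\tau)$ be the multi-type Galton–Watson hypertree, $W^\pm_t$ the number of generation-$t$ vertices with spin $\pm1$, $\mathcal G_t$ the $\sigma$-algebra generated by $W^{\pm}_k$, $k\le t$, and $M_t=\alpha^{-t}(W_t^++W_t^-)$, $\Delta_t=\beta^{-t}(W_t^+-W_t^-)$. Then $\{M_t\}$ and $\{\Delta_t\}$ are $\mathcal G_t$-martingales. If $\beta^2>\alpha>1$, then $\{M_t\}$ and $\{\Delta_t\}$ are uniformly integrable, and the martingale $\{\Delta_t\}$ converges almost surely and in $L^2$ to a random variable $\Delta_\infty$ with $\mathbb E\Delta_\infty=1$ and finite variance, and $\lim_{t\to\infty}\mathbb E|\Delta_t^2-\Delta_\infty^2|=0$.
   Context: Fix an integer $d\ge3$ and constants $a\ge b>0$; $\alpha=(d-1)\frac{a+(2^{d-1}-1)b}{2^{d-1}}$, $\beta=(d-1)\frac{a-b}{2^{d-1}}$. Multi-type Galton–Watson hypertree $(T,\rho,\tau)$: the root $\rho$ (generation 0) has spin $\tau(\rho)=+1$. Recursively, each vertex $v$ of generation $t$ independently receives $\mathrm{Pois}(\alpha/(d-1))$ new hyperedges, each consisting of $v$ and $d-1$ new vertices (children of $v$, generation $t+1$), pairwise intersecting only at $v$. Each such hyperedge independently gets a type $r\in\{0,\dots,d-1\}$: type $d-1$ with probability $\frac{(d-1)a}{\alpha2^{d-1}}$ and type $r\le d-2$ with probability $\frac{(d-1)b\binom{d-1}{r}}{\alpha2^{d-1}}$; in a type-$r$ hyperedge a uniformly random set of $r$ of the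 $d-1$ children get spin $\tau(v)$ and the rest get $-\tau(v)$. *)

theory Defs
  imports "HOL-Probability.Probability"
begin

definition gw_alpha :: "nat \<Rightarrow> real \<Rightarrow> real \<Rightarrow> real" where
  "gw_alpha d a b = (real d - 1) * (a + (2 ^ (d - 1) - 1) * b) / 2 ^ (d - 1)"

definition gw_beta :: "nat \<Rightarrow> real \<Rightarrow> real \<Rightarrow> real" where
  "gw_beta d a b = (real d - 1) * (a - b) / 2 ^ (d - 1)"

definition edge_type_pmf :: "nat \<Rightarrow> real \<Rightarrow> real \<Rightarrow> nat pmf" where
  "edge_type_pmf d a b = embed_pmf (\<lambda>r.
     if r = d - 1 then (real d - 1) * a / (gw_alpha d a b * 2 ^ (d - 1))
     else if r \<le> d - 2 then (real d - 1) * b * real ((d - 1) choose r) / (gw_alpha d a b * 2 ^ (d - 1))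
     else 0)"

fun iid_sum :: "nat \<Rightarrow> (nat \<times> nat) pmf \<Rightarrow> (nat \<times> nat) pmf" where
  "iid_sum 0 D = return_pmf (0, 0)"
| "iid_sum (Suc n) D = D \<bind> (\<lambda>x. iid_sum n D \<bind> (\<lambda>y. return_pmf (fst x + fst y, snd x + snd y)))"

text \<open>Counts (children with the same spin, children with opposite spin) produced by one
  hyperedge: a type-r hyperedge has r children with the parent's spin and d-1-r with the
  opposite spin.\<close>
definition edge_same_opp :: "nat \<Rightarrow> real \<Rightarrow> real \<Rightarrow> (nat \<times> nat) pmf" where
  "edge_same_opp d a b = map_pmf (\<lambda>r. (r, d - 1 - r)) (edge_type_pmf d a b)"

definition offspring_same_opp :: "nat \<Rightarrow> real \<Rightarrow> real \<Rightarrow> (nat \<times> nat) pmf" where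
  "offspring_same_opp d a b =
     poisson_pmf (gw_alpha d a b / (real d - 1)) \<bind> (\<lambda>N. iid_sum N (edge_same_opp d a b))"

text \<open>Transition law of (W+_t, W-_t) -> (W+_{t+1}, W-_{t+1}): every vertex of generation t
  reproduces independently; a +1 vertex's same-spin children are +1, a -1 vertex's same-spin
  children are -1.\<close>
definition gw_step :: "nat \<Rightarrow> real \<Rightarrow> real \<Rightarrow> nat \<times> nat \<Rightarrow> (nat \<times> nat) pmf" where
  "gw_step d a b w =
     iid_sum (fst w) (offspring_same_opp d a b) \<bind> (\<lambda>x.
     iid_sum (snd w) (map_pmf (\<lambda>(x1, x2). (x2, x1)) (offspring_same_opp d a b)) \<bind> (\<lambda>y.
     return_pmf (fst x + fst y, snd x + snd y)))"

text \<open>W is a realisation of the spin-count process (W+_t, W-_t)_t of the hypertree with root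
  spin +1: W 0 = (1,0) and, given the history, the next generation has law gw_step.\<close>
definition is_gw_count_process ::
  "nat \<Rightarrow> real \<Rightarrow> real \<Rightarrow> 'w measure \<Rightarrow> (nat \<Rightarrow> 'w \<Rightarrow> nat \<times> nat) \<Rightarrow> bool" where
  "is_gw_count_process d a b M W \<longleftrightarrow>
     prob_space M \<and>
     (\<forall>t. W t \<in> M \<rightarrow>\<^sub>M count_space UNIV) \<and>
     (\<forall>\<omega>\<in>space M. W 0 \<omega> = (1, 0)) \<and>
     (\<forall>t (h :: nat \<Rightarrow> nat \<times> nat) s.
        measure M {\<omega>\<in>space M. (\<forall>k\<le>t. W k \<omega> = h k) \<and> W (Suc t) \<omega> = s}
        = measure M {\<omega>\<in>space M. \<forall>k\<le>t. W k \<omega> = h k} * pmf (gw_step d a b (h t)) s)"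

definition gen_filtration :: "'w measure \<Rightarrow> (nat \<Rightarrow> 'w \<Rightarrow> 'b) \<Rightarrow> nat \<Rightarrow> 'w measure" where
  "gen_filtration M W t = sigma (space M) {W k -` A \<inter> space M | k A. k \<le> t}"

definition martingale :: "'w measure \<Rightarrow> (nat \<Rightarrow> 'w measure) \<Rightarrow> (nat \<Rightarrow> 'w \<Rightarrow> real) \<Rightarrow> bool" where
  "martingale M F X \<longleftrightarrow>
     (\<forall>t. subalgebra M (F t) \<and> sets (F t) \<subseteq> sets (F (Suc t)) \<and>
          X t \<in> borel_measurable (F t) \<and> integrable M (X t) \<and>
          (AE \<omega> in M. real_cond_exp M (F t) (X (Suc t)) \<omega> = X t \<omega>))"

definition uniformly_integrable :: "'w measure \<Rightarrow> (nat \<Rightarrow> 'w \<Rightarrow> real) \<Rightarrow> bool" where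
  "uniformly_integrable M X \<longleftrightarrow>
     (\<forall>t. integrable M (X t)) \<and>
     (\<forall>\<epsilon>>0. \<exists>K. \<forall>t. (\<integral>\<omega>. (if \<bar>X t \<omega>\<bar> \<ge> K then \<bar>X t \<omega>\<bar> else 0) \<partial>M) \<le> \<epsilon>)"

end

theory Submission
  imports Defs
begin

definition addp :: "(nat \<times> nat) pmf \<Rightarrow> (nat \<times> nat) pmf \<Rightarrow> (nat \<times> nat) pmf" where
  "addp p q = p \<bind> (\<lambda>x. q \<bind> (\<lambda>y. return_pmf (fst x + fst y, snd x + snd y)))"

lemma iid_Suc: "iid_sum (Suc n) D = addp D (iid_sum n D)"
  by (simp add: addp_def)

definition additive :: "(nat \<times> nat \<Rightarrow> ennreal) \<Rightarrow> bool" where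
  "additive f \<longleftrightarrow> (\<forall>x y. f (fst x + fst y, snd x + snd y) = f x + f y) \<and> f (0,0) = 0"

lemma E_addp1:
  assumes "additive f"
  shows "(\<integral>\<^sup>+z. f z \<partial>addp p q) = (\<integral>\<^sup>+z. f z \<partial>p) + (\<integral>\<^sup>+z. f z \<partial>q)"
proof -
  have "(\<integral>\<^sup>+z. f z \<partial>addp p q) = (\<integral>\<^sup>+x. \<integral>\<^sup>+y. f x + f y \<partial>q \<partial>p)"
    using assms by (simp add: addp_def additive_def)
  also have "\<dots> = (\<integral>\<^sup>+x. f x + (\<integral>\<^sup>+y. f y \<partial>q) \<partial>p)"
    by (simp add: nn_integral_add measure_pmf.emeasure_space_1)
  also have "\<dots> = (\<integral>\<^sup>+z. f z \<partial>p) + (\<integral>\<^sup>+z. f z \<partial>q)"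
    by (simp add: nn_integral_add measure_pmf.emeasure_space_1)
  finally show ?thesis .
qed

lemma E_addp2:
  assumes "additive f" "additive g"
  shows "(\<integral>\<^sup>+z. f z * g z \<partial>addp p q) = (\<integral>\<^sup>+z. f z * g z \<partial>p) + (\<integral>\<^sup>+z. f z \<partial>p) * (\<integral>\<^sup>+z. g z \<partial>q)
     + (\<integral>\<^sup>+z. g z \<partial>p) * (\<integral>\<^sup>+z. f z \<partial>q) + (\<integral>\<^sup>+z. f z * g z \<partial>q)"
proof -
  have "(\<integral>\<^sup>+z. f z * g z \<partial>addp p q) = (\<integral>\<^sup>+x. \<integral>\<^sup>+y. (f x * g x + g x * f y) + (f x * g y + f y * g y) \<partial>q \<partial>p)"
    using assms by (simp add: addp_def additive_def algebra_simps)
  also have "\<dots> = (\<integral>\<^sup>+x. (f x * g x + g x * (\<integral>\<^sup>+y. f y \<partial>q)) + (f x * (\<integral>\<^sup>+y. g y \<partial>q) + (\<integral>\<^sup>+y. f y * g y \<partial>q)) \<partial>p)"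
    by (simp add: nn_integral_add nn_integral_cmult measure_pmf.emeasure_space_1)
  also have "\<dots> = ((\<integral>\<^sup>+z. f z * g z \<partial>p) + (\<integral>\<^sup>+z. g z \<partial>p) * (\<integral>\<^sup>+y. f y \<partial>q)) + ((\<integral>\<^sup>+z. f z \<partial>p) * (\<integral>\<^sup>+y. g y \<partial>q) + (\<integral>\<^sup>+y. f y * g y \<partial>q))"
    by (simp add: nn_integral_add nn_integral_cmult nn_integral_multc measure_pmf.emeasure_space_1)
  finally show ?thesis by (simp add: algebra_simps)
qed

lemma E_iid1:
  assumes "additive f"
  shows "(\<integral>\<^sup>+z. f z \<partial>iid_sum n D) = of_nat n * (\<integral>\<^sup>+z. f z \<partial>D)"
proof (induction n)
  case 0
  then show ?case using assms by (simp add: additive_def)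
next
  case (Suc n)
  then show ?case using assms by (simp only: iid_Suc E_addp1) (simp add: algebra_simps)
qed

lemma E_iid2:
  assumes "additive f" "additive g"
  shows "(\<integral>\<^sup>+z. f z * g z \<partial>iid_sum n D) = of_nat n * (\<integral>\<^sup>+z. f z * g z \<partial>D)
     + of_nat (n * (n - 1)) * ((\<integral>\<^sup>+z. f z \<partial>D) * (\<integral>\<^sup>+z. g z \<partial>D))"
proof (induction n)
  case 0
  then show ?case using assms by (simp add: additive_def)
next
  case (Suc n)
  have e: "of_nat (Suc n * (Suc n - 1)) = (of_nat (n * (n - 1)) + of_nat n + of_nat n :: ennreal)"
  proof -
    have "Suc n * (Suc n - 1) = n * (n - 1) + n + n" by (cases n) (auto simp: algebra_simps)
    then show ?thesis by (simp only: of_nat_add)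
  qed
  show ?case using Suc assms
    by (simp only: iid_Suc E_addp2 E_iid1 e) (simp add: algebra_simps)
qed

lemma pois1:
  assumes "0 < l"
  shows "(\<integral>\<^sup>+N. of_nat N \<partial>poisson_pmf l) = ennreal l"
proof -
  have s: "(\<lambda>N. l ^ N / fact N * exp (-l) * real N) sums l"
  proof -
    have "(\<lambda>n. l * (l ^ n / fact n * exp (-l))) sums (l * (exp l * exp (-l)))"
      by (intro sums_mult sums_mult2) (use exp_converges[of l] in \<open>simp add: divide_inverse mult.commute\<close>)
    then have A: "(\<lambda>n. l * (l ^ n / fact n * exp (-l))) sums l" by (simp add: exp_minus)
    have B: "l * (l ^ n / fact n * exp (-l)) = l ^ Suc n / fact (Suc n) * exp (-l) * real (Suc n)" for n
      by (simp add: fact_Suc field_simps del: of_nat_Suc)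
    define F where "F = (\<lambda>N. l ^ N / fact N * exp (-l) * real N)"
    from A have "(\<lambda>n. F (Suc n)) sums l"
      by (simp only: B F_def)
    then have "F sums (l + F 0)" by (simp only: sums_Suc_iff)
    then show ?thesis by (simp add: F_def)
  qed
  have "(\<integral>\<^sup>+N. of_nat N \<partial>poisson_pmf l) = (\<Sum>N. ennreal (l ^ N / fact N * exp (-l) * real N))"
    using assms by (simp add: nn_integral_measure_pmf nn_integral_count_space_nat ennreal_mult'[symmetric] ennreal_of_nat_eq_real_of_nat)
  also have "\<dots> = ennreal l"
    using assms by (intro suminf_ennreal_eq s) auto
  finally show ?thesis .
qed

lemma pois2:
  assumes "0 < l"
  shows "(\<integral>\<^sup>+N. of_nat (N * (N - 1)) \<partial>poisson_pmf l) = ennreal (l^2)"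
proof -
  have s: "(\<lambda>N. l ^ N / fact N * exp (-l) * real (N * (N - 1))) sums (l^2)"
  proof -
    have "(\<lambda>n. l^2 * (l ^ n / fact n * exp (-l))) sums (l^2 * (exp l * exp (-l)))"
      by (intro sums_mult sums_mult2) (use exp_converges[of l] in \<open>simp add: divide_inverse mult.commute\<close>)
    then have A: "(\<lambda>n. l^2 * (l ^ n / fact n * exp (-l))) sums (l^2)" by (simp add: exp_minus)
    have B: "l^2 * (l ^ n / fact n * exp (-l)) = l ^ Suc (Suc n) / fact (Suc (Suc n)) * exp (-l) * real (Suc (Suc n) * (Suc (Suc n) - 1))" for n
      by (simp add: fact_Suc field_simps power2_eq_square del: of_nat_Suc) (simp add: algebra_simps)
    define F where "F = (\<lambda>N. l ^ N / fact N * exp (-l) * real (N * (N - 1)))"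
    from A have "(\<lambda>n. F (Suc (Suc n))) sums (l^2)"
      by (simp only: B F_def)
    then have "(\<lambda>n. F (Suc n)) sums (l^2 + F 1)" using sums_Suc_iff[of "\<lambda>n. F (Suc n)" "l^2"] by simp
    then have "F sums (l^2 + F 1 + F 0)" using sums_Suc_iff[of F "l^2 + F 1"] by simp
    then show ?thesis by (simp add: F_def)
  qed
  have "(\<integral>\<^sup>+N. of_nat (N * (N - 1)) \<partial>poisson_pmf l) = (\<Sum>N. ennreal (l ^ N / fact N * exp (-l) * real (N * (N - 1))))"
    using assms by (simp add: nn_integral_measure_pmf nn_integral_count_space_nat ennreal_mult'[symmetric] ennreal_of_nat_eq_real_of_nat del: of_nat_mult)
  also have "\<dots> = ennreal (l^2)"
    using assms by (intro suminf_ennreal_eq s) auto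
  finally show ?thesis .
qed


definition ef :: "nat \<Rightarrow> real \<Rightarrow> real \<Rightarrow> nat \<Rightarrow> real" where
  "ef d a b = (\<lambda>r.
     if r = d - 1 then (real d - 1) * a / (gw_alpha d a b * 2 ^ (d - 1))
     else if r \<le> d - 2 then (real d - 1) * b * real ((d - 1) choose r) / (gw_alpha d a b * 2 ^ (d - 1))
     else 0)"

lemma sum_atMost_split: "(\<Sum>r\<le>(n::nat). f r) = (\<Sum>r<n. f r) + (f n :: 'a::comm_monoid_add)"
proof -
  have "{..n} = insert n {..<n}" by auto
  then show ?thesis by (simp add: add.commute)
qed

locale prm =
  fixes n :: nat and a b :: real
  assumes n2: "n \<ge> 2" and ab: "a \<ge> b" and bpos: "b > 0"
begin

abbreviation "d \<equiv> Suc n"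
abbreviation "\<alpha> \<equiv> gw_alpha d a b"
abbreviation "\<beta> \<equiv> gw_beta d a b"

lemma d3: "d \<ge> 3" using n2 by simp

lemma alpha_eq: "\<alpha> * 2 ^ n = real n * (a + (2 ^ n - 1) * b)"
  by (simp add: gw_alpha_def)

lemma alpha_pos: "\<alpha> > 0"
proof -
  have "(2::real) ^ n \<ge> 1" by simp
  then have "(2 ^ n - 1) * b \<ge> 0" using bpos by simp
  then have "a + (2 ^ n - 1) * b > 0" using ab bpos by linarith
  then show ?thesis using n2 by (simp add: gw_alpha_def)
qed

lemma beta_eq: "\<beta> = real n * (a - b) / 2 ^ n"
  by (simp add: gw_beta_def)

lemma beta_nonneg: "\<beta> \<ge> 0" using ab by (simp add: beta_eq)

lemma ef_nonneg: "ef d a b r \<ge> 0"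
proof -
  have "real d - 1 \<ge> 0" using d3 by simp
  moreover have "gw_alpha d a b * 2 ^ (d - 1) > 0" using alpha_pos by simp
  ultimately show ?thesis using ab bpos
    unfolding ef_def by (simp add: divide_nonneg_pos)
qed

lemma ef_zero: "r > n \<Longrightarrow> ef d a b r = 0"
  by (auto simp: ef_def)

lemma choose_less_sum: "(\<Sum>r<n. real (n choose r)) = 2 ^ n - 1"
proof -
  have "(\<Sum>r\<le>n. real (n choose r)) = 2 ^ n"
  proof -
    have "real (\<Sum>r\<le>n. (n choose r)) = 2 ^ n" by (simp only: choose_row_sum) simp
    then show ?thesis by simp
  qed
  moreover have "(\<Sum>r\<le>n. real (n choose r)) = (\<Sum>r<n. real (n choose r)) + 1"
    by (subst sum_atMost_split) simp
  ultimately show ?thesis by simp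
qed

lemma choose_less_lin: "(\<Sum>r<n. real r * real (n choose r)) = real n * 2 ^ (n - 1) - real n"
proof -
  have "(\<Sum>r\<le>n. real r * real (n choose r)) = real n * 2 ^ (n - 1)"
  proof -
    have "real (\<Sum>r\<le>n. r * (n choose r)) = real n * 2 ^ (n - 1)" by (simp only: choose_linear_sum) simp
    then show ?thesis by simp
  qed
  moreover have "(\<Sum>r\<le>n. real r * real (n choose r)) = (\<Sum>r<n. real r * real (n choose r)) + real n"
    by (subst sum_atMost_split) simp
  ultimately show ?thesis by simp
qed

lemma ef_sum: "(\<Sum>r\<le>n. ef d a b r) = 1"
proof -
  have "(\<Sum>r\<le>n. ef d a b r) = (\<Sum>r<n. ef d a b r) + ef d a b n"
    by (subst sum_atMost_split) simp
  also have "(\<Sum>r<n. ef d a b r) = (\<Sum>r<n. real n * b / (\<alpha> * 2 ^ n) * real (n choose r))"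
    by (intro sum.cong) (auto simp: ef_def)
  also have "\<dots> = real n * b / (\<alpha> * 2 ^ n) * (2 ^ n - 1)"
    by (simp only: sum_distrib_left[symmetric] choose_less_sum)
  also have "ef d a b n = real n * a / (\<alpha> * 2 ^ n)" by (simp add: ef_def)
  also have "real n * b / (\<alpha> * 2 ^ n) * (2 ^ n - 1) + real n * a / (\<alpha> * 2 ^ n) = 1"
    using alpha_pos alpha_eq by (simp add: field_simps)
  finally show ?thesis .
qed

lemma ef_lin: "(\<Sum>r\<le>n. ef d a b r * real r) = (real n * real n * a + real n * b * (real n * 2 ^ (n - 1) - real n)) / (\<alpha> * 2 ^ n)"
proof -
  have "(\<Sum>r\<le>n. ef d a b r * real r) = (\<Sum>r<n. ef d a b r * real r) + ef d a b n * real n"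
    by (subst sum_atMost_split) simp
  also have "(\<Sum>r<n. ef d a b r * real r) = (\<Sum>r<n. real n * b / (\<alpha> * 2 ^ n) * (real r * real (n choose r)))"
    by (intro sum.cong) (auto simp: ef_def)
  also have "\<dots> = real n * b / (\<alpha> * 2 ^ n) * (real n * 2 ^ (n - 1) - real n)"
    by (simp only: sum_distrib_left[symmetric] choose_less_lin)
  also have "ef d a b n = real n * a / (\<alpha> * 2 ^ n)" by (simp add: ef_def)
  finally show ?thesis using alpha_pos by (simp add: field_simps)
qed

lemma ef_ennreal_sum: "(\<integral>\<^sup>+r. ennreal (ef d a b r) \<partial>count_space UNIV) = 1"
proof -
  have "(\<integral>\<^sup>+r. ennreal (ef d a b r) \<partial>count_space UNIV) = (\<Sum>r\<le>n. ennreal (ef d a b r))"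
    by (intro nn_integral_count_space') (auto simp: ef_zero)
  also have "\<dots> = ennreal (\<Sum>r\<le>n. ef d a b r)"
    by (intro sum_ennreal) (simp add: ef_nonneg)
  finally show ?thesis by (simp add: ef_sum)
qed

lemma pmf_edge: "pmf (edge_type_pmf d a b) r = ef d a b r"
  unfolding edge_type_pmf_def ef_def[symmetric]
  by (intro pmf_embed_pmf ef_nonneg ef_ennreal_sum)

lemma set_edge: "set_pmf (edge_type_pmf d a b) \<subseteq> {..n}"
proof
  fix x assume "x \<in> set_pmf (edge_type_pmf d a b)"
  then have "ef d a b x \<noteq> 0" by (simp add: set_pmf_iff pmf_edge)
  then show "x \<in> {..n}" using ef_zero[of x] by (auto simp: not_le[symmetric])
qed

lemma E_edge: "(\<integral>\<^sup>+r. ennreal (g r) \<partial>edge_type_pmf d a b) = ennreal (\<Sum>r\<le>n. g r * ef d a b r)"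
  if "\<And>r. g r \<ge> 0" for g
proof -
  have "(\<integral>\<^sup>+r. ennreal (g r) \<partial>edge_type_pmf d a b) = (\<Sum>r\<le>n. ennreal (g r) * pmf (edge_type_pmf d a b) r)"
    using set_edge by (intro nn_integral_measure_pmf_support) auto
  also have "\<dots> = ennreal (\<Sum>r\<le>n. g r * ef d a b r)"
  proof -
    have "ennreal (g r) * ennreal (ef d a b r) = ennreal (g r * ef d a b r)" for r
      using that ef_nonneg by (simp add: ennreal_mult)
    then show ?thesis using that ef_nonneg by (simp add: pmf_edge sum_ennreal)
  qed
  finally show ?thesis .
qed

end

definition fU :: "nat \<times> nat \<Rightarrow> ennreal" where "fU z = of_nat (fst z)"
definition fV :: "nat \<times> nat \<Rightarrow> ennreal" where "fV z = of_nat (snd z)"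

lemma additive_fU: "additive fU" by (simp add: additive_def fU_def)
lemma additive_fV: "additive fV" by (simp add: additive_def fV_def)

lemma E_comp1:
  assumes "additive f" "0 < l"
  shows "(\<integral>\<^sup>+z. f z \<partial>measure_pmf (bind_pmf (poisson_pmf l) (\<lambda>N. iid_sum N E))) = ennreal l * (\<integral>\<^sup>+z. f z \<partial>E)"
  using assms by (simp add: E_iid1 nn_integral_multc pois1)

lemma E_comp2:
  assumes "additive f" "additive g" "0 < l"
  shows "(\<integral>\<^sup>+z. f z * g z \<partial>measure_pmf (bind_pmf (poisson_pmf l) (\<lambda>N. iid_sum N E))) =
     ennreal l * (\<integral>\<^sup>+z. f z * g z \<partial>E) + ennreal (l^2) * ((\<integral>\<^sup>+z. f z \<partial>E) * (\<integral>\<^sup>+z. g z \<partial>E))"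
proof -
  have p2: "(\<integral>\<^sup>+N. of_nat (N * (N - Suc 0)) \<partial>poisson_pmf l) = ennreal (l^2)"
    using pois2[OF assms(3)] by (simp only: One_nat_def)
  show ?thesis
    using assms by (simp add: E_iid2 nn_integral_multc nn_integral_add pois1 p2 del: of_nat_mult)
qed

definition swp :: "nat \<times> nat \<Rightarrow> nat \<times> nat" where "swp = (\<lambda>(x1, x2). (x2, x1))"

lemma gw_step_addp: "gw_step d a b w = addp (iid_sum (fst w) (offspring_same_opp d a b))
   (iid_sum (snd w) (map_pmf swp (offspring_same_opp d a b)))"
  by (simp add: gw_step_def addp_def swp_def)

lemma E_swp: "(\<integral>\<^sup>+z. f z \<partial>map_pmf swp p) = (\<integral>\<^sup>+z. f (swp z) \<partial>p)"
  by simp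

lemma fU_swp: "fU (swp z) = fV z" and fV_swp: "fV (swp z) = fU z"
  by (auto simp: fU_def fV_def swp_def split: prod.splits)

context prm
begin

abbreviation "Off \<equiv> offspring_same_opp d a b"
abbreviation "l \<equiv> \<alpha> / real n"

lemma l_pos: "l > 0" using alpha_pos n2 by simp

lemma O_def': "Off = poisson_pmf l \<bind> (\<lambda>N. iid_sum N (edge_same_opp d a b))"
  by (simp add: offspring_same_opp_def)

lemma set_edge_so: "z \<in> set_pmf (edge_same_opp d a b) \<Longrightarrow> fst z \<le> n \<and> snd z \<le> n"
  using set_edge by (auto simp: edge_same_opp_def)

lemma edge_fin: "(\<integral>\<^sup>+z. h z \<partial>edge_same_opp d a b) < \<infinity>"
  if "\<And>z. fst z \<le> n \<Longrightarrow> snd z \<le> n \<Longrightarrow> h z \<le> of_nat (n * n)" for h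
proof -
  have "(\<integral>\<^sup>+z. h z \<partial>edge_same_opp d a b) \<le> (\<integral>\<^sup>+z. of_nat (n * n) \<partial>edge_same_opp d a b)"
    by (intro nn_integral_mono_AE AE_pmfI that) (auto dest: set_edge_so)
  also have "\<dots> < \<infinity>" by (simp add: measure_pmf.emeasure_space_1 ennreal_of_nat_eq_real_of_nat)
  finally show ?thesis .
qed

lemma edge_fin_all:
  "(\<integral>\<^sup>+z. fU z \<partial>edge_same_opp d a b) < \<infinity>" "(\<integral>\<^sup>+z. fV z \<partial>edge_same_opp d a b) < \<infinity>"
  "(\<integral>\<^sup>+z. fU z * fU z \<partial>edge_same_opp d a b) < \<infinity>" "(\<integral>\<^sup>+z. fU z * fV z \<partial>edge_same_opp d a b) < \<infinity>"
  "(\<integral>\<^sup>+z. fV z * fV z \<partial>edge_same_opp d a b) < \<infinity>"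
proof -
  have *: "of_nat p \<le> (of_nat (n * n) :: ennreal)" if "p \<le> n * n" for p using that by (rule of_nat_mono)
  have **: "of_nat p * of_nat q \<le> (of_nat (n * n) :: ennreal)" if "p \<le> n" "q \<le> n" for p q
    using that mult_le_mono[OF that] by (simp del: of_nat_mult add: of_nat_mult[symmetric])
  have ***: "p \<le> n \<Longrightarrow> p \<le> n * n" for p using n2 by (metis le_trans mult_le_mono1 nat_mult_1 one_le_numeral le_trans[OF _ n2] nat_mult_1_right mult_le_mono2 le_square)
  show "(\<integral>\<^sup>+z. fU z \<partial>edge_same_opp d a b) < \<infinity>" "(\<integral>\<^sup>+z. fV z \<partial>edge_same_opp d a b) < \<infinity>"
    "(\<integral>\<^sup>+z. fU z * fU z \<partial>edge_same_opp d a b) < \<infinity>" "(\<integral>\<^sup>+z. fU z * fV z \<partial>edge_same_opp d a b) < \<infinity>"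
    "(\<integral>\<^sup>+z. fV z * fV z \<partial>edge_same_opp d a b) < \<infinity>"
    by (rule edge_fin, simp del: of_nat_mult add: fU_def fV_def * ** ***)+
qed

lemma edge_fU: "(\<integral>\<^sup>+z. fU z \<partial>edge_same_opp d a b) = ennreal (\<Sum>r\<le>n. real r * ef d a b r)"
proof -
  have "(\<integral>\<^sup>+z. fU z \<partial>edge_same_opp d a b) = (\<integral>\<^sup>+r. ennreal (real r) \<partial>edge_type_pmf d a b)"
    by (simp add: edge_same_opp_def fU_def ennreal_of_nat_eq_real_of_nat)
  then show ?thesis by (simp add: E_edge)
qed

lemma edge_fV: "(\<integral>\<^sup>+z. fV z \<partial>edge_same_opp d a b) = ennreal (\<Sum>r\<le>n. real (n - r) * ef d a b r)"
proof -
  have "(\<integral>\<^sup>+z. fV z \<partial>edge_same_opp d a b) = (\<integral>\<^sup>+r. ennreal (real (n - r)) \<partial>edge_type_pmf d a b)"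
    by (simp add: edge_same_opp_def fV_def ennreal_of_nat_eq_real_of_nat)
  then show ?thesis by (simp add: E_edge)
qed

definition "e1 = (\<Sum>r\<le>n. real r * ef d a b r)"

lemma e2_eq: "(\<Sum>r\<le>n. real (n - r) * ef d a b r) = real n - e1"
proof -
  have "(\<Sum>r\<le>n. real (n - r) * ef d a b r) = (\<Sum>r\<le>n. real n * ef d a b r - real r * ef d a b r)"
    by (intro sum.cong) (auto simp: of_nat_diff algebra_simps)
  also have "\<dots> = real n - e1"
    by (simp add: sum_subtractf sum_distrib_left[symmetric] ef_sum e1_def)
  finally show ?thesis .
qed

lemma e1_eq: "l * (2 * e1 - real n) = \<beta>"
proof -
  have "e1 = (\<Sum>r\<le>n. ef d a b r * real r)" unfolding e1_def by (simp add: mult.commute)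
  also have "\<dots> = (real n * real n * a + real n * b * (real n * 2 ^ (n - 1) - real n)) / (\<alpha> * 2 ^ n)"
    by (rule ef_lin)
  finally have e: "e1 = \<dots>" .
  have p: "(2::real) ^ n = 2 * 2 ^ (n - 1)" using n2 by (metis power_Suc Suc_diff_1 less_le_trans pos2 le_add2 add_2_eq_Suc' not_less_eq_eq less_2_cases_iff)
  define P :: real where "P = 2 ^ (n - 1)"
  have Ppos: "P > 0" by (simp add: P_def)
  define S where "S = a + (2 * P - 1) * b"
  have q: "S > 0" using Ppos ab bpos unfolding S_def
    by (smt (verit, ccfv_SIG) mult_le_cancel_right1 one_le_power P_def)
  have np: "real n > 0" using n2 by simp
  have h1: "\<alpha> * (2 * P) = real n * S"
    using alpha_eq p unfolding P_def S_def by simp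
  have h2: "l = S / (2 * P)" using h1 np Ppos by (simp add: field_simps)
  have h3: "e1 = (real n * a + b * (real n * P - real n)) / S"
    unfolding e P_def[symmetric] p[folded P_def] using h1 np q Ppos
    by (simp add: field_simps)
  have "l * (2 * e1 - real n) = (2 * (real n * a + b * (real n * P - real n)) - real n * S) / (2 * P)"
    unfolding h2 h3 using q Ppos by (simp add: field_simps)
  also have "\<dots> = real n * (a - b) / (2 * P)" unfolding S_def by (simp add: algebra_simps)
  finally show ?thesis unfolding beta_eq p[folded P_def] .
qed

end

context prm
begin

abbreviation "O' \<equiv> map_pmf swp Off"

lemma Off_fin:
  "(\<integral>\<^sup>+z. fU z \<partial>Off) < \<top>" "(\<integral>\<^sup>+z. fV z \<partial>Off) < \<top>"
  "(\<integral>\<^sup>+z. fU z * fU z \<partial>Off) < \<top>" "(\<integral>\<^sup>+z. fU z * fV z \<partial>Off) < \<top>"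
  "(\<integral>\<^sup>+z. fV z * fV z \<partial>Off) < \<top>"
  unfolding O_def' using edge_fin_all l_pos
  by (simp_all add: E_comp1 E_comp2 additive_fU additive_fV ennreal_mult_less_top del: nn_integral_bind_pmf)

lemma O'_eqs:
  "(\<integral>\<^sup>+z. fU z \<partial>O') = (\<integral>\<^sup>+z. fV z \<partial>Off)" "(\<integral>\<^sup>+z. fV z \<partial>O') = (\<integral>\<^sup>+z. fU z \<partial>Off)"
  "(\<integral>\<^sup>+z. fU z * fU z \<partial>O') = (\<integral>\<^sup>+z. fV z * fV z \<partial>Off)"
  "(\<integral>\<^sup>+z. fU z * fV z \<partial>O') = (\<integral>\<^sup>+z. fU z * fV z \<partial>Off)"
  "(\<integral>\<^sup>+z. fV z * fV z \<partial>O') = (\<integral>\<^sup>+z. fU z * fU z \<partial>Off)"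
  by (simp_all add: fU_swp fV_swp mult.commute)

definition "A1 = enn2real (\<integral>\<^sup>+z. fU z \<partial>Off)"
definition "A2 = enn2real (\<integral>\<^sup>+z. fV z \<partial>Off)"
definition "B11 = enn2real (\<integral>\<^sup>+z. fU z * fU z \<partial>Off)"
definition "B12 = enn2real (\<integral>\<^sup>+z. fU z * fV z \<partial>Off)"
definition "B22 = enn2real (\<integral>\<^sup>+z. fV z * fV z \<partial>Off)"

lemma e1_nonneg: "e1 \<ge> 0" unfolding e1_def by (intro sum_nonneg mult_nonneg_nonneg ef_nonneg) auto
lemma e2_nonneg: "real n - e1 \<ge> 0" unfolding e2_eq[symmetric] by (intro sum_nonneg mult_nonneg_nonneg ef_nonneg) auto

lemma A1_eq: "A1 = l * e1"
  unfolding A1_def O_def' using l_pos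
  by (simp add: E_comp1 additive_fU edge_fU e1_def[symmetric] e1_nonneg enn2real_mult del: nn_integral_bind_pmf)

lemma A2_eq: "A2 = l * (real n - e1)"
  unfolding A2_def O_def' using l_pos
  by (simp add: E_comp1 additive_fV edge_fV e2_eq enn2real_ennreal[OF e2_nonneg] enn2real_mult del: of_nat_diff nn_integral_bind_pmf)

lemma A_sum: "A1 + A2 = \<alpha>" using n2 by (simp add: A1_eq A2_eq field_simps)
lemma A_diff: "A1 - A2 = \<beta>" using e1_eq n2 by (simp add: A1_eq A2_eq field_simps)

abbreviation "stp \<equiv> gw_step d a b"

lemma step_1:
  assumes "additive f"
  shows "(\<integral>\<^sup>+z. f z \<partial>stp w) = of_nat (fst w) * (\<integral>\<^sup>+z. f z \<partial>Off) + of_nat (snd w) * (\<integral>\<^sup>+z. f z \<partial>O')"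
  unfolding gw_step_addp using assms by (simp only: E_addp1 E_iid1)

lemma step_2:
  assumes "additive f" "additive g"
  shows "(\<integral>\<^sup>+z. f z * g z \<partial>stp w) =
    (of_nat (fst w) * (\<integral>\<^sup>+z. f z * g z \<partial>Off) + of_nat (fst w * (fst w - 1)) * ((\<integral>\<^sup>+z. f z \<partial>Off) * (\<integral>\<^sup>+z. g z \<partial>Off)))
  + (of_nat (fst w) * (\<integral>\<^sup>+z. f z \<partial>Off)) * (of_nat (snd w) * (\<integral>\<^sup>+z. g z \<partial>O'))
  + (of_nat (fst w) * (\<integral>\<^sup>+z. g z \<partial>Off)) * (of_nat (snd w) * (\<integral>\<^sup>+z. f z \<partial>O'))
  + (of_nat (snd w) * (\<integral>\<^sup>+z. f z * g z \<partial>O') + of_nat (snd w * (snd w - 1)) * ((\<integral>\<^sup>+z. f z \<partial>O') * (\<integral>\<^sup>+z. g z \<partial>O')))"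
  unfolding gw_step_addp using assms by (simp only: E_addp2 E_iid1 E_iid2)

lemma rnn: "real (x * (x - 1)) = real x * (real x - 1)"
  by (cases x) (auto simp: algebra_simps)

lemmas fins = Off_fin[simplified top_ennreal.rep_eq[symmetric]] ennreal_mult_less_top of_nat_less_top

lemma step_U: "(\<integral>\<^sup>+z. fU z \<partial>stp w) < \<top> \<and> enn2real (\<integral>\<^sup>+z. fU z \<partial>stp w) = real (fst w) * A1 + real (snd w) * A2"
  using Off_fin by (simp add: step_1 additive_fU O'_eqs fU_swp fV_swp enn2real_plus enn2real_mult ennreal_mult_less_top of_nat_less_top A1_def A2_def)

lemma step_V: "(\<integral>\<^sup>+z. fV z \<partial>stp w) < \<top> \<and> enn2real (\<integral>\<^sup>+z. fV z \<partial>stp w) = real (fst w) * A2 + real (snd w) * A1"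
  using Off_fin by (simp add: step_1 additive_fV O'_eqs fU_swp fV_swp enn2real_plus enn2real_mult ennreal_mult_less_top of_nat_less_top A1_def A2_def)

lemma step_UU: "(\<integral>\<^sup>+z. fU z * fU z \<partial>stp w) < \<top> \<and> enn2real (\<integral>\<^sup>+z. fU z * fU z \<partial>stp w) =
   real (fst w) * B11 + real (fst w) * (real (fst w) - 1) * A1 * A1 + 2 * real (fst w) * real (snd w) * A1 * A2
   + real (snd w) * B22 + real (snd w) * (real (snd w) - 1) * A2 * A2"
  using Off_fin by (simp add: step_2 additive_fU O'_eqs fU_swp fV_swp enn2real_plus enn2real_mult ennreal_mult_less_top of_nat_less_top A1_def A2_def B11_def B22_def rnn algebra_simps del: of_nat_mult) (simp add: algebra_simps)

lemma step_UV: "(\<integral>\<^sup>+z. fU z * fV z \<partial>stp w) < \<top> \<and> enn2real (\<integral>\<^sup>+z. fU z * fV z \<partial>stp w) =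
   real (fst w) * B12 + real (fst w) * (real (fst w) - 1) * A1 * A2 + real (fst w) * real (snd w) * A1 * A1
   + real (fst w) * real (snd w) * A2 * A2
   + real (snd w) * B12 + real (snd w) * (real (snd w) - 1) * A1 * A2"
  using Off_fin by (simp add: step_2 additive_fU additive_fV O'_eqs fU_swp fV_swp enn2real_plus enn2real_mult ennreal_mult_less_top of_nat_less_top A1_def A2_def B12_def rnn algebra_simps del: of_nat_mult) (simp add: algebra_simps)

lemma step_VV: "(\<integral>\<^sup>+z. fV z * fV z \<partial>stp w) < \<top> \<and> enn2real (\<integral>\<^sup>+z. fV z * fV z \<partial>stp w) =
   real (fst w) * B22 + real (fst w) * (real (fst w) - 1) * A2 * A2 + 2 * real (fst w) * real (snd w) * A1 * A2
   + real (snd w) * B11 + real (snd w) * (real (snd w) - 1) * A1 * A1"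
  using Off_fin by (simp add: step_2 additive_fV O'_eqs fU_swp fV_swp enn2real_plus enn2real_mult ennreal_mult_less_top of_nat_less_top A1_def A2_def B11_def B22_def rnn algebra_simps del: of_nat_mult) (simp add: algebra_simps)

end

lemma int_from_nn:
  fixes p :: "'a pmf"
  assumes "(\<integral>\<^sup>+ s. ennreal (F s) \<partial>p) < \<top>" "\<And>s. F s \<ge> 0"
  shows "integrable p F \<and> integral\<^sup>L p F = enn2real (\<integral>\<^sup>+ s. ennreal (F s) \<partial>p)"
  using assms by (auto intro!: integrableI_nonneg integral_eq_nn_integral)

context prm
begin

definition "C1 = B11 + 2 * B12 + B22 - \<alpha>^2"
definition "C2 = B11 - 2 * B12 + B22 - \<beta>^2"

lemma fU_eq: "fU = (\<lambda>s. ennreal (real (fst s)))" by (simp add: fU_def fun_eq_iff ennreal_of_nat_eq_real_of_nat)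
lemma fV_eq: "fV = (\<lambda>s. ennreal (real (snd s)))" by (simp add: fV_def fun_eq_iff ennreal_of_nat_eq_real_of_nat)
lemma fUU_eq: "(\<lambda>s. fU s * fU s) = (\<lambda>s. ennreal (real (fst s) * real (fst s)))" by (simp add: fU_eq fun_eq_iff ennreal_mult)
lemma fUV_eq: "(\<lambda>s. fU s * fV s) = (\<lambda>s. ennreal (real (fst s) * real (snd s)))" by (simp add: fU_eq fV_eq fun_eq_iff ennreal_mult)
lemma fVV_eq: "(\<lambda>s. fV s * fV s) = (\<lambda>s. ennreal (real (snd s) * real (snd s)))" by (simp add: fV_eq fun_eq_iff ennreal_mult)

lemma rU: "integrable (stp w) (\<lambda>s. real (fst s)) \<and> (\<integral>s. real (fst s) \<partial>stp w) = real (fst w) * A1 + real (snd w) * A2"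
  using int_from_nn[of "stp w" "\<lambda>s. real (fst s)"] step_U[of w] by (simp add: fU_eq)
lemma rV: "integrable (stp w) (\<lambda>s. real (snd s)) \<and> (\<integral>s. real (snd s) \<partial>stp w) = real (fst w) * A2 + real (snd w) * A1"
  using int_from_nn[of "stp w" "\<lambda>s. real (snd s)"] step_V[of w] by (simp add: fV_eq)
lemma rUU: "integrable (stp w) (\<lambda>s. real (fst s) * real (fst s)) \<and> (\<integral>s. real (fst s) * real (fst s) \<partial>stp w) =
   real (fst w) * B11 + real (fst w) * (real (fst w) - 1) * A1 * A1 + 2 * real (fst w) * real (snd w) * A1 * A2
   + real (snd w) * B22 + real (snd w) * (real (snd w) - 1) * A2 * A2"
  using int_from_nn[of "stp w" "\<lambda>s. real (fst s) * real (fst s)"] step_UU[of w] by (simp add: fUU_eq)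
lemma rUV: "integrable (stp w) (\<lambda>s. real (fst s) * real (snd s)) \<and> (\<integral>s. real (fst s) * real (snd s) \<partial>stp w) =
   real (fst w) * B12 + real (fst w) * (real (fst w) - 1) * A1 * A2 + real (fst w) * real (snd w) * A1 * A1
   + real (fst w) * real (snd w) * A2 * A2
   + real (snd w) * B12 + real (snd w) * (real (snd w) - 1) * A1 * A2"
  using int_from_nn[of "stp w" "\<lambda>s. real (fst s) * real (snd s)"] step_UV[of w] by (simp add: fUV_eq)
lemma rVV: "integrable (stp w) (\<lambda>s. real (snd s) * real (snd s)) \<and> (\<integral>s. real (snd s) * real (snd s) \<partial>stp w) =
   real (fst w) * B22 + real (fst w) * (real (fst w) - 1) * A2 * A2 + 2 * real (fst w) * real (snd w) * A1 * A2
   + real (snd w) * B11 + real (snd w) * (real (snd w) - 1) * A1 * A1"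
  using int_from_nn[of "stp w" "\<lambda>s. real (snd s) * real (snd s)"] step_VV[of w] by (simp add: fVV_eq)

lemma rQ:
  fixes cz cx cy :: real
  defines "Q \<equiv> \<lambda>s. (cx * real (fst s) + cy * real (snd s) + cz)\<^sup>2"
  shows "integrable (stp w) Q \<and> integral\<^sup>L (stp w) Q =
    cx^2 * (\<integral>s. real (fst s) * real (fst s) \<partial>stp w) + 2 * cx * cy * (\<integral>s. real (fst s) * real (snd s) \<partial>stp w)
    + cy^2 * (\<integral>s. real (snd s) * real (snd s) \<partial>stp w) + 2 * cx * cz * (\<integral>s. real (fst s) \<partial>stp w)
    + 2 * cy * cz * (\<integral>s. real (snd s) \<partial>stp w) + cz^2"
proof -
  have eq: "Q = (\<lambda>s. cx^2 * (real (fst s) * real (fst s)) + 2 * cx * cy * (real (fst s) * real (snd s))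
    + cy^2 * (real (snd s) * real (snd s)) + 2 * cx * cz * real (fst s) + 2 * cy * cz * real (snd s) + cz^2)"
    unfolding Q_def by (simp add: fun_eq_iff power2_eq_square algebra_simps)
  note I = rU[of w] rV[of w] rUU[of w] rUV[of w] rVV[of w]
  show ?thesis unfolding eq using I measure_pmf.prob_space_axioms
    by (simp add: prob_space.prob_space)
qed

end

context prm
begin

lemma rQ_val:
  fixes cz cx cy :: real
  shows "integrable (stp w) (\<lambda>s. (cx * real (fst s) + cy * real (snd s) + cz)\<^sup>2) \<and>
    (\<integral>s. (cx * real (fst s) + cy * real (snd s) + cz)\<^sup>2 \<partial>stp w) =
    cx^2 * (real (fst w) * B11 + real (fst w) * (real (fst w) - 1) * A1 * A1 + 2 * real (fst w) * real (snd w) * A1 * A2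
   + real (snd w) * B22 + real (snd w) * (real (snd w) - 1) * A2 * A2)
    + 2 * cx * cy * (real (fst w) * B12 + real (fst w) * (real (fst w) - 1) * A1 * A2 + real (fst w) * real (snd w) * A1 * A1
   + real (fst w) * real (snd w) * A2 * A2
   + real (snd w) * B12 + real (snd w) * (real (snd w) - 1) * A1 * A2)
    + cy^2 * (real (fst w) * B22 + real (fst w) * (real (fst w) - 1) * A2 * A2 + 2 * real (fst w) * real (snd w) * A1 * A2
   + real (snd w) * B11 + real (snd w) * (real (snd w) - 1) * A1 * A1)
    + 2 * cx * cz * (real (fst w) * A1 + real (snd w) * A2)
    + 2 * cy * cz * (real (fst w) * A2 + real (snd w) * A1) + cz^2"
  using rQ[where cx=cx and cy=cy and cz=cz and w=w] rU[of w] rV[of w] rUU[of w] rUV[of w] rVV[of w] by simp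

lemma S2: "integrable (stp w) (\<lambda>s. (real (fst s) + real (snd s))\<^sup>2) \<and>
    (\<integral>s. (real (fst s) + real (snd s))\<^sup>2 \<partial>stp w) = \<alpha>^2 * (real (fst w) + real (snd w))^2 + C1 * (real (fst w) + real (snd w))"
  using rQ_val[where cx=1 and cy=1 and cz=0 and w=w] unfolding C1_def A_sum[symmetric]
  by (simp add: power2_eq_square algebra_simps)

lemma S3: "integrable (stp w) (\<lambda>s. (real (fst s) - real (snd s))\<^sup>2) \<and>
    (\<integral>s. (real (fst s) - real (snd s))\<^sup>2 \<partial>stp w) = \<beta>^2 * (real (fst w) - real (snd w))^2 + C2 * (real (fst w) + real (snd w))"
  using rQ_val[where cx=1 and cy="-1" and cz=0 and w=w] unfolding C2_def A_diff[symmetric]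
  by (simp add: power2_eq_square algebra_simps)

lemma S4: "integrable (stp w) (\<lambda>s. (real (fst s) - real (snd s) - \<beta> * (real (fst w) - real (snd w)))\<^sup>2) \<and>
    (\<integral>s. (real (fst s) - real (snd s) - \<beta> * (real (fst w) - real (snd w)))\<^sup>2 \<partial>stp w) = C2 * (real (fst w) + real (snd w))"
  using rQ_val[where cx=1 and cy="-1" and cz="- \<beta> * (real (fst w) - real (snd w))" and w=w] unfolding C2_def A_diff[symmetric]
  by (simp add: power2_eq_square algebra_simps)

lemma S5: "integrable (stp w) (\<lambda>s. (real (fst s) + real (snd s) - \<alpha> * (real (fst w) + real (snd w)))\<^sup>2) \<and>
    (\<integral>s. (real (fst s) + real (snd s) - \<alpha> * (real (fst w) + real (snd w)))\<^sup>2 \<partial>stp w) = C1 * (real (fst w) + real (snd w))"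
  using rQ_val[where cx=1 and cy=1 and cz="- \<alpha> * (real (fst w) + real (snd w))" and w=w] unfolding C1_def A_sum[symmetric]
  by (simp add: power2_eq_square algebra_simps)

lemma C1_nonneg: "C1 \<ge> 0"
  using S5[of "(1,0)"] integral_nonneg_AE[of "\<lambda>s. (real (fst s) + real (snd s) - \<alpha> * (real 1 + real 0))\<^sup>2" "stp (1,0)"]
  by simp

lemma C2_nonneg: "C2 \<ge> 0"
  using S4[of "(1,0)"] integral_nonneg_AE[of "\<lambda>s. (real (fst s) - real (snd s) - \<beta> * (real 1 - real 0))\<^sup>2" "stp (1,0)"]
  by simp

lemma nnI: "integrable (stp w) F \<and> integral\<^sup>L (stp w) F = c \<Longrightarrow> (\<And>s. F s \<ge> 0) \<Longrightarrow> (\<integral>\<^sup>+s. ennreal (F s) \<partial>stp w) = ennreal c"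
  by (metis nn_integral_eq_integral AE_I2)

end

lemma countable_decomp:
  fixes Z :: "'w \<Rightarrow> 'c::countable" and g :: "'c \<Rightarrow> ennreal"
  assumes Z[measurable]: "Z \<in> M \<rightarrow>\<^sub>M count_space UNIV" and A[measurable]: "A \<in> sets M"
  shows "(\<integral>\<^sup>+\<omega>. g (Z \<omega>) * indicator A \<omega> \<partial>M) = (\<integral>\<^sup>+z. g z * emeasure M ({\<omega>\<in>space M. Z \<omega> = z} \<inter> A) \<partial>count_space UNIV)"
proof -
  have meas: "{\<omega>\<in>space M. Z \<omega> = z} \<in> sets M" for z by measurable
  have "(\<integral>\<^sup>+\<omega>. g (Z \<omega>) * indicator A \<omega> \<partial>M) = (\<integral>\<^sup>+\<omega>. \<integral>\<^sup>+z. g z * indicator ({\<omega>\<in>space M. Z \<omega> = z} \<inter> A) \<omega> \<partial>count_space UNIV \<partial>M)"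
  proof (rule nn_integral_cong)
    fix \<omega> assume \<omega>: "\<omega> \<in> space M"
    have "(\<integral>\<^sup>+z. g z * indicator ({\<omega>\<in>space M. Z \<omega> = z} \<inter> A) \<omega> \<partial>count_space UNIV) =
          (\<integral>\<^sup>+z. (g z * indicator A \<omega>) * indicator {Z \<omega>} z \<partial>count_space UNIV)"
      using \<omega> by (intro nn_integral_cong) (auto split: split_indicator)
    also have "\<dots> = g (Z \<omega>) * indicator A \<omega>" by simp
    finally show "g (Z \<omega>) * indicator A \<omega> = (\<integral>\<^sup>+z. g z * indicator ({\<omega>\<in>space M. Z \<omega> = z} \<inter> A) \<omega> \<partial>count_space UNIV)" ..
  qed
  also have "\<dots> = (\<integral>\<^sup>+z. \<integral>\<^sup>+\<omega>. g z * indicator ({\<omega>\<in>space M. Z \<omega> = z} \<inter> A) \<omega> \<partial>M \<partial>count_space UNIV)"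
    using meas by (intro nn_integral_count_space_nn_integral) auto
  also have "\<dots> = (\<integral>\<^sup>+z. g z * emeasure M ({\<omega>\<in>space M. Z \<omega> = z} \<inter> A) \<partial>count_space UNIV)"
    using meas by (intro nn_integral_cong) (simp add: nn_integral_cmult)
  finally show ?thesis .
qed

locale gwp = prm +
  fixes M :: "'w measure" and W :: "nat \<Rightarrow> 'w \<Rightarrow> nat \<times> nat"
  assumes proc: "is_gw_count_process (Suc n) a b M W"
begin

sublocale P: prob_space M using proc by (simp add: is_gw_count_process_def)

lemma W_meas[measurable]: "W t \<in> M \<rightarrow>\<^sub>M count_space UNIV"
  using proc by (simp add: is_gw_count_process_def)

lemma W0: "\<omega> \<in> space M \<Longrightarrow> W 0 \<omega> = (1, 0)"
  using proc by (simp add: is_gw_count_process_def)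

definition hist :: "nat \<Rightarrow> 'w \<Rightarrow> (nat \<times> nat) list" where
  "hist t \<omega> = map (\<lambda>k. W k \<omega>) [0..<Suc t]"

lemma hist_eq: "hist t \<omega> = hs \<longleftrightarrow> length hs = Suc t \<and> (\<forall>k\<le>t. W k \<omega> = hs ! k)"
  unfolding hist_def
  by (auto simp: list_eq_iff_nth_eq less_Suc_eq_le simp del: upt_Suc)

lemma hist_nth: "hist t \<omega> ! t = W t \<omega>"
  unfolding hist_def by (simp del: upt_Suc)

lemma hist_meas[measurable]: "hist t \<in> M \<rightarrow>\<^sub>M count_space UNIV"
proof (subst measurable_count_space_eq2_countable, safe)
  fix hs :: "(nat \<times> nat) list"
  have "hist t -` {hs} \<inter> space M = (if length hs = Suc t then {\<omega>\<in>space M. \<forall>k\<in>{..t}. W k \<omega> = hs ! k} else {})"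
    by (rule set_eqI) (auto simp: hist_eq)
  also have "\<dots> \<in> sets M" by (cases "length hs = Suc t") (simp_all, measurable)
  finally show "hist t -` {hs} \<inter> space M \<in> sets M" .
qed auto

lemma markov:
  "emeasure M {\<omega>\<in>space M. hist t \<omega> = hs \<and> W (Suc t) \<omega> = s} =
   emeasure M {\<omega>\<in>space M. hist t \<omega> = hs} * ennreal (pmf (stp (hs ! t)) s)"
proof (cases "length hs = Suc t")
  case True
  have "measure M {\<omega>\<in>space M. (\<forall>k\<le>t. W k \<omega> = hs ! k) \<and> W (Suc t) \<omega> = s}
        = measure M {\<omega>\<in>space M. \<forall>k\<le>t. W k \<omega> = hs ! k} * pmf (stp (hs ! t)) s"
    using proc unfolding is_gw_count_process_def by blast
  moreover have "{\<omega>\<in>space M. hist t \<omega> = hs \<and> W (Suc t) \<omega> = s} = {\<omega>\<in>space M. (\<forall>k\<le>t. W k \<omega> = hs ! k) \<and> W (Suc t) \<omega> = s}"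
    "{\<omega>\<in>space M. hist t \<omega> = hs} = {\<omega>\<in>space M. \<forall>k\<le>t. W k \<omega> = hs ! k}"
    using True by (auto simp: hist_eq)
  ultimately show ?thesis
    by (simp add: P.emeasure_eq_measure ennreal_mult)
next
  case False
  then show ?thesis by (simp add: hist_eq)
qed

end

context gwp
begin

lemma K:
  fixes B :: "(nat \<times> nat) list set" and f :: "nat \<times> nat \<Rightarrow> nat \<times> nat \<Rightarrow> ennreal"
  shows "(\<integral>\<^sup>+\<omega>. indicator B (hist t \<omega>) * f (W t \<omega>) (W (Suc t) \<omega>) \<partial>M) =
         (\<integral>\<^sup>+\<omega>. indicator B (hist t \<omega>) * (\<integral>\<^sup>+s. f (W t \<omega>) s \<partial>stp (W t \<omega>)) \<partial>M)"
proof -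
  define G where "G = (\<lambda>hs s. indicator B hs * f (hs ! t) s :: ennreal)"
  define As where "As = (\<lambda>s. {\<omega>\<in>space M. W (Suc t) \<omega> = s})"
  define E where "E = (\<lambda>hs. emeasure M {\<omega>\<in>space M. hist t \<omega> = hs})"
  have As[measurable]: "As s \<in> sets M" for s unfolding As_def by measurable
  have "(\<integral>\<^sup>+\<omega>. indicator B (hist t \<omega>) * f (W t \<omega>) (W (Suc t) \<omega>) \<partial>M) =
        (\<integral>\<^sup>+\<omega>. \<integral>\<^sup>+s. G (hist t \<omega>) s * indicator (As s) \<omega> \<partial>count_space UNIV \<partial>M)"
  proof (rule nn_integral_cong)
    fix \<omega> assume \<omega>: "\<omega> \<in> space M"
    have "(\<integral>\<^sup>+s. G (hist t \<omega>) s * indicator (As s) \<omega> \<partial>count_space UNIV) =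
          (\<integral>\<^sup>+s. G (hist t \<omega>) s * indicator {W (Suc t) \<omega>} s \<partial>count_space UNIV)"
      using \<omega> by (intro nn_integral_cong) (auto simp: As_def split: split_indicator)
    also have "\<dots> = G (hist t \<omega>) (W (Suc t) \<omega>)" by simp
    finally show "indicator B (hist t \<omega>) * f (W t \<omega>) (W (Suc t) \<omega>) =
        (\<integral>\<^sup>+s. G (hist t \<omega>) s * indicator (As s) \<omega> \<partial>count_space UNIV)"
      by (simp add: G_def hist_nth)
  qed
  also have "\<dots> = (\<integral>\<^sup>+s. \<integral>\<^sup>+\<omega>. G (hist t \<omega>) s * indicator (As s) \<omega> \<partial>M \<partial>count_space UNIV)"
    by (intro nn_integral_count_space_nn_integral) auto
  also have "\<dots> = (\<integral>\<^sup>+s. \<integral>\<^sup>+hs. G hs s * (E hs * ennreal (pmf (stp (hs ! t)) s)) \<partial>count_space UNIV \<partial>count_space UNIV)"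
  proof (rule nn_integral_cong)
    fix s
    have "(\<integral>\<^sup>+\<omega>. G (hist t \<omega>) s * indicator (As s) \<omega> \<partial>M) =
          (\<integral>\<^sup>+hs. G hs s * emeasure M ({\<omega>\<in>space M. hist t \<omega> = hs} \<inter> As s) \<partial>count_space UNIV)"
      by (rule countable_decomp[where g="\<lambda>hs. G hs s"]) auto
    also have "\<dots> = (\<integral>\<^sup>+hs. G hs s * (E hs * ennreal (pmf (stp (hs ! t)) s)) \<partial>count_space UNIV)"
    proof (rule nn_integral_cong)
      fix hs
      have "{\<omega>\<in>space M. hist t \<omega> = hs} \<inter> As s = {\<omega>\<in>space M. hist t \<omega> = hs \<and> W (Suc t) \<omega> = s}"
        by (auto simp: As_def)
      then show "G hs s * emeasure M ({\<omega>\<in>space M. hist t \<omega> = hs} \<inter> As s) = G hs s * (E hs * ennreal (pmf (stp (hs ! t)) s))"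
        by (simp add: markov E_def)
    qed
    finally show "(\<integral>\<^sup>+\<omega>. G (hist t \<omega>) s * indicator (As s) \<omega> \<partial>M) = \<dots>" .
  qed
  also have "\<dots> = (\<integral>\<^sup>+hs. \<integral>\<^sup>+s. G hs s * (E hs * ennreal (pmf (stp (hs ! t)) s)) \<partial>count_space UNIV \<partial>count_space UNIV)"
    by (rule nn_integral_count_space_nn_integral[symmetric]) auto
  also have "\<dots> = (\<integral>\<^sup>+hs. (indicator B hs * (\<integral>\<^sup>+s. f (hs ! t) s \<partial>stp (hs ! t))) * E hs \<partial>count_space UNIV)"
  proof (rule nn_integral_cong)
    fix hs
    have "(\<integral>\<^sup>+s. G hs s * (E hs * ennreal (pmf (stp (hs ! t)) s)) \<partial>count_space UNIV) =
          (\<integral>\<^sup>+s. (indicator B hs * E hs) * (ennreal (pmf (stp (hs ! t)) s) * f (hs ! t) s) \<partial>count_space UNIV)"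
      by (intro nn_integral_cong) (simp add: G_def algebra_simps)
    also have "\<dots> = (indicator B hs * E hs) * (\<integral>\<^sup>+s. f (hs ! t) s \<partial>stp (hs ! t))"
      by (simp add: nn_integral_cmult nn_integral_measure_pmf)
    finally show "(\<integral>\<^sup>+s. G hs s * (E hs * ennreal (pmf (stp (hs ! t)) s)) \<partial>count_space UNIV) =
       (indicator B hs * (\<integral>\<^sup>+s. f (hs ! t) s \<partial>stp (hs ! t))) * E hs"
      by (simp add: algebra_simps)
  qed
  also have "\<dots> = (\<integral>\<^sup>+\<omega>. (indicator B (hist t \<omega>) * (\<integral>\<^sup>+s. f (hist t \<omega> ! t) s \<partial>stp (hist t \<omega> ! t))) * indicator (space M) \<omega> \<partial>M)"
    unfolding E_def
    by (subst countable_decomp[where g="\<lambda>hs. indicator B hs * (\<integral>\<^sup>+s. f (hs ! t) s \<partial>stp (hs ! t))"]) auto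
  also have "\<dots> = (\<integral>\<^sup>+\<omega>. indicator B (hist t \<omega>) * (\<integral>\<^sup>+s. f (W t \<omega>) s \<partial>stp (W t \<omega>)) \<partial>M)"
    by (intro nn_integral_cong) (simp add: hist_nth)
  finally show ?thesis .
qed

end

context gwp
begin

lemma meas2[measurable]: "(\<lambda>\<omega>. F (W t \<omega>) (W u \<omega>) :: real) \<in> borel_measurable M"
proof -
  have "(\<lambda>\<omega>. (W t \<omega>, W u \<omega>)) \<in> M \<rightarrow>\<^sub>M count_space UNIV"
  proof (subst measurable_count_space_eq2_countable, safe)
    fix p :: "(nat \<times> nat) \<times> (nat \<times> nat)"
    have "(\<lambda>\<omega>. (W t \<omega>, W u \<omega>)) -` {p} \<inter> space M = {\<omega>\<in>space M. W t \<omega> = fst p \<and> W u \<omega> = snd p}"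
      by (cases p) auto
    also have "\<dots> \<in> sets M" by measurable
    finally show "(\<lambda>\<omega>. (W t \<omega>, W u \<omega>)) -` {p} \<inter> space M \<in> sets M" .
  qed auto
  then show ?thesis
    using measurable_compose[of "\<lambda>\<omega>. (W t \<omega>, W u \<omega>)" M "count_space UNIV" "\<lambda>p. F (fst p) (snd p)" borel]
    by simp
qed

lemma meas1[measurable]: "(\<lambda>\<omega>. F (W t \<omega>) :: real) \<in> borel_measurable M"
  using measurable_compose[OF W_meas, of F borel] by simp

lemma RK:
  fixes F :: "nat \<times> nat \<Rightarrow> nat \<times> nat \<Rightarrow> real" and Gv :: "nat \<times> nat \<Rightarrow> real"
  assumes Fnn: "\<And>w s. F w s \<ge> 0" and Gnn: "\<And>w. Gv w \<ge> 0"
    and inner: "\<And>w. (\<integral>\<^sup>+s. ennreal (F w s) \<partial>stp w) = ennreal (Gv w)"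
    and intG: "integrable M (\<lambda>\<omega>. Gv (W t \<omega>))"
  shows "integrable M (\<lambda>\<omega>. F (W t \<omega>) (W (Suc t) \<omega>))"
    "(\<integral>\<omega>. indicator B (hist t \<omega>) * F (W t \<omega>) (W (Suc t) \<omega>) \<partial>M) = (\<integral>\<omega>. indicator B (hist t \<omega>) * Gv (W t \<omega>) \<partial>M)"
proof -
  have k: "(\<integral>\<^sup>+\<omega>. ennreal (indicator B (hist t \<omega>) * F (W t \<omega>) (W (Suc t) \<omega>)) \<partial>M) =
        (\<integral>\<^sup>+\<omega>. ennreal (indicator B (hist t \<omega>) * Gv (W t \<omega>)) \<partial>M)" for B
  proof -
    have "(\<integral>\<^sup>+\<omega>. ennreal (indicator B (hist t \<omega>) * F (W t \<omega>) (W (Suc t) \<omega>)) \<partial>M) =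
      (\<integral>\<^sup>+\<omega>. indicator B (hist t \<omega>) * ennreal (F (W t \<omega>) (W (Suc t) \<omega>)) \<partial>M)"
      by (intro nn_integral_cong) (simp split: split_indicator)
    also have "\<dots> = (\<integral>\<^sup>+\<omega>. indicator B (hist t \<omega>) * (\<integral>\<^sup>+s. ennreal (F (W t \<omega>) s) \<partial>stp (W t \<omega>)) \<partial>M)"
      by (rule K)
    also have "\<dots> = (\<integral>\<^sup>+\<omega>. ennreal (indicator B (hist t \<omega>) * Gv (W t \<omega>)) \<partial>M)"
      by (intro nn_integral_cong) (simp add: inner split: split_indicator)
    finally show ?thesis .
  qed
  have fin: "(\<integral>\<^sup>+\<omega>. ennreal (Gv (W t \<omega>)) \<partial>M) < \<infinity>"
    using intG Gnn by (simp add: integrable_iff_bounded)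
  show int: "integrable M (\<lambda>\<omega>. F (W t \<omega>) (W (Suc t) \<omega>))"
    using k[of UNIV] fin Fnn by (intro integrableI_nonneg) auto
  have "(\<integral>\<omega>. indicator B (hist t \<omega>) * F (W t \<omega>) (W (Suc t) \<omega>) \<partial>M) =
        enn2real (\<integral>\<^sup>+\<omega>. ennreal (indicator B (hist t \<omega>) * F (W t \<omega>) (W (Suc t) \<omega>)) \<partial>M)"
    using Fnn by (intro integral_eq_nn_integral) auto
  also have "\<dots> = enn2real (\<integral>\<^sup>+\<omega>. ennreal (indicator B (hist t \<omega>) * Gv (W t \<omega>)) \<partial>M)"
    by (simp add: k)
  also have "\<dots> = (\<integral>\<omega>. indicator B (hist t \<omega>) * Gv (W t \<omega>) \<partial>M)"
    using Gnn by (intro integral_eq_nn_integral[symmetric]) auto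
  finally show "(\<integral>\<omega>. indicator B (hist t \<omega>) * F (W t \<omega>) (W (Suc t) \<omega>) \<partial>M) = (\<integral>\<omega>. indicator B (hist t \<omega>) * Gv (W t \<omega>) \<partial>M)" .
qed

end

context prm
begin
lemma A1_nonneg: "A1 \<ge> 0" unfolding A1_eq using l_pos e1_nonneg by (intro mult_nonneg_nonneg) auto
lemma A2_nonneg: "A2 \<ge> 0" unfolding A2_eq using l_pos e2_nonneg by (intro mult_nonneg_nonneg) auto
end

context gwp
begin

definition "Sr t \<omega> = real (fst (W t \<omega>)) + real (snd (W t \<omega>))"
definition "Dr t \<omega> = real (fst (W t \<omega>)) - real (snd (W t \<omega>))"

lemma inner_S: "(\<integral>\<^sup>+s. ennreal (real (fst s) + real (snd s)) \<partial>stp w) = ennreal (\<alpha> * (real (fst w) + real (snd w)))"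
  using rU[of w] rV[of w] by (intro nnI) (auto simp: A_sum[symmetric] algebra_simps)

lemma inner_U: "(\<integral>\<^sup>+s. ennreal (real (fst s)) \<partial>stp w) = ennreal (real (fst w) * A1 + real (snd w) * A2)"
  using rU[of w] by (intro nnI) auto

lemma inner_V: "(\<integral>\<^sup>+s. ennreal (real (snd s)) \<partial>stp w) = ennreal (real (fst w) * A2 + real (snd w) * A1)"
  using rV[of w] by (intro nnI) auto

lemma inner_S2: "(\<integral>\<^sup>+s. ennreal ((real (fst s) + real (snd s))\<^sup>2) \<partial>stp w) =
   ennreal (\<alpha>^2 * (real (fst w) + real (snd w))^2 + C1 * (real (fst w) + real (snd w)))"
  using S2[of w] by (intro nnI) auto

lemma inner_D2: "(\<integral>\<^sup>+s. ennreal ((real (fst s) - real (snd s))\<^sup>2) \<partial>stp w) =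
   ennreal (\<beta>^2 * (real (fst w) - real (snd w))^2 + C2 * (real (fst w) + real (snd w)))"
  using S3[of w] by (intro nnI) auto

lemma inner_D4: "(\<integral>\<^sup>+s. ennreal ((real (fst s) - real (snd s) - \<beta> * (real (fst w) - real (snd w)))\<^sup>2) \<partial>stp w) =
   ennreal (C2 * (real (fst w) + real (snd w)))"
  using S4[of w] by (intro nnI) auto

lemma Sr0: "\<omega> \<in> space M \<Longrightarrow> Sr 0 \<omega> = 1" by (simp add: Sr_def W0)
lemma Dr0: "\<omega> \<in> space M \<Longrightarrow> Dr 0 \<omega> = 1" by (simp add: Dr_def W0)

lemma Sr_nonneg: "Sr t \<omega> \<ge> 0" by (simp add: Sr_def)

lemma Sr_meas[measurable]: "Sr t \<in> borel_measurable M" unfolding Sr_def by measurable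
lemma Dr_meas[measurable]: "Dr t \<in> borel_measurable M" unfolding Dr_def by measurable

lemma mom1: "integrable M (Sr t) \<and> (\<integral>\<omega>. Sr t \<omega> \<partial>M) = \<alpha> ^ t"
proof (induction t)
  case 0
  have "integrable M (\<lambda>\<omega>. 1::real)" by simp
  then have "integrable M (Sr 0)" by (rule integrable_cong_AE_imp) (auto intro!: AE_I2 simp: Sr0)
  moreover have "(\<integral>\<omega>. Sr 0 \<omega> \<partial>M) = (\<integral>\<omega>. 1 \<partial>M)" 
    by (rule Bochner_Integration.integral_cong) (auto simp: Sr0)
  ultimately show ?case by (simp add: P.prob_space)
next
  case (Suc t)
  have intG: "integrable M (\<lambda>\<omega>. \<alpha> * (real (fst (W t \<omega>)) + real (snd (W t \<omega>))))"
    using Suc by (simp add: Sr_def)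
  note R = RK[where F="\<lambda>w s. real (fst s) + real (snd s)" and Gv="\<lambda>w. \<alpha> * (real (fst w) + real (snd w))" and t=t,
     OF _ _ inner_S intG]
  have "integrable M (Sr (Suc t))" using R(1) alpha_pos by (simp add: Sr_def[abs_def])
  moreover have "(\<integral>\<omega>. Sr (Suc t) \<omega> \<partial>M) = \<alpha> * (\<integral>\<omega>. Sr t \<omega> \<partial>M)"
    using R(2)[where B=UNIV] alpha_pos by (simp add: Sr_def)
  ultimately show ?case using Suc by simp
qed

end

context gwp
begin

lemma Gnn1: "0 \<le> \<alpha>^2 * (real (fst w) + real (snd w))^2 + C1 * (real (fst w) + real (snd w))"
  using C1_nonneg by (intro add_nonneg_nonneg mult_nonneg_nonneg) auto
lemma Gnn2: "0 \<le> \<beta>^2 * (real (fst w) - real (snd w))^2 + C2 * (real (fst w) + real (snd w))"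
  using C2_nonneg by (intro add_nonneg_nonneg mult_nonneg_nonneg) auto
lemma Gnn3: "0 \<le> C2 * (real (fst w) + real (snd w))"
  using C2_nonneg by (intro add_nonneg_nonneg mult_nonneg_nonneg) auto

lemma W0_fun: "integrable M (\<lambda>\<omega>. \<phi> (W 0 \<omega>) :: real) \<and> (\<integral>\<omega>. \<phi> (W 0 \<omega>) \<partial>M) = \<phi> (1, 0)"
proof -
  have "integrable M (\<lambda>\<omega>. \<phi> (1, 0) :: real)" by simp
  then have "integrable M (\<lambda>\<omega>. \<phi> (W 0 \<omega>))" by (rule integrable_cong_AE_imp) (auto intro!: AE_I2 simp: W0)
  moreover have "(\<integral>\<omega>. \<phi> (W 0 \<omega>) \<partial>M) = (\<integral>\<omega>. \<phi> (1, 0) \<partial>M)"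
    by (rule Bochner_Integration.integral_cong) (auto simp: W0)
  ultimately show ?thesis by (simp add: P.prob_space)
qed

lemma Sr_fun: "Sr t = (\<lambda>\<omega>. real (fst (W t \<omega>)) + real (snd (W t \<omega>)))" by (simp add: Sr_def[abs_def])
lemma Dr_fun: "Dr t = (\<lambda>\<omega>. real (fst (W t \<omega>)) - real (snd (W t \<omega>)))" by (simp add: Dr_def[abs_def])

lemma int_S: "integrable M (Sr t)" using mom1 by blast
lemma E_S: "(\<integral>\<omega>. Sr t \<omega> \<partial>M) = \<alpha> ^ t" using mom1 by blast

lemma int_S2: "integrable M (\<lambda>\<omega>. (Sr t \<omega>)^2)"
proof (induction t)
  case 0
  then show ?case using W0_fun[of "\<lambda>w. (real (fst w) + real (snd w))^2"] by (simp add: Sr_fun)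
next
  case (Suc t)
  have intG: "integrable M (\<lambda>\<omega>. \<alpha>^2 * (real (fst (W t \<omega>)) + real (snd (W t \<omega>)))^2 + C1 * (real (fst (W t \<omega>)) + real (snd (W t \<omega>))))"
    using Suc int_S[of t] by (simp add: Sr_fun)
  show ?case
    using RK(1)[where F="\<lambda>w s. (real (fst s) + real (snd s))^2" and t=t, OF _ Gnn1 inner_S2 intG]
    by (simp add: Sr_fun)
qed

lemma rec_S2: "(\<integral>\<omega>. (Sr (Suc t) \<omega>)^2 \<partial>M) = \<alpha>^2 * (\<integral>\<omega>. (Sr t \<omega>)^2 \<partial>M) + C1 * \<alpha>^t"
proof -
  have intG: "integrable M (\<lambda>\<omega>. \<alpha>^2 * (real (fst (W t \<omega>)) + real (snd (W t \<omega>)))^2 + C1 * (real (fst (W t \<omega>)) + real (snd (W t \<omega>))))"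
    using int_S2[of t] int_S[of t] by (simp add: Sr_fun)
  have "(\<integral>\<omega>. (Sr (Suc t) \<omega>)^2 \<partial>M) = (\<integral>\<omega>. \<alpha>^2 * (Sr t \<omega>)^2 + C1 * Sr t \<omega> \<partial>M)"
    using RK(2)[where F="\<lambda>w s. (real (fst s) + real (snd s))^2" and t=t and B=UNIV, OF _ Gnn1 inner_S2 intG]
    by (simp add: Sr_fun)
  also have "\<dots> = \<alpha>^2 * (\<integral>\<omega>. (Sr t \<omega>)^2 \<partial>M) + C1 * \<alpha>^t"
    using int_S2[of t] int_S[of t] E_S[of t] by simp
  finally show ?thesis .
qed

lemma int_D2: "integrable M (\<lambda>\<omega>. (Dr t \<omega>)^2)"
proof (induction t)
  case 0
  then show ?case using W0_fun[of "\<lambda>w. (real (fst w) - real (snd w))^2"] by (simp add: Dr_fun)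
next
  case (Suc t)
  have intG: "integrable M (\<lambda>\<omega>. \<beta>^2 * (real (fst (W t \<omega>)) - real (snd (W t \<omega>)))^2 + C2 * (real (fst (W t \<omega>)) + real (snd (W t \<omega>))))"
    using Suc int_S[of t] by (simp add: Sr_fun Dr_fun)
  show ?case
    using RK(1)[where F="\<lambda>w s. (real (fst s) - real (snd s))^2" and t=t, OF _ Gnn2 inner_D2 intG]
    by (simp add: Dr_fun)
qed

lemma rec_D2: "(\<integral>\<omega>. (Dr (Suc t) \<omega>)^2 \<partial>M) = \<beta>^2 * (\<integral>\<omega>. (Dr t \<omega>)^2 \<partial>M) + C2 * \<alpha>^t"
proof -
  have intG: "integrable M (\<lambda>\<omega>. \<beta>^2 * (real (fst (W t \<omega>)) - real (snd (W t \<omega>)))^2 + C2 * (real (fst (W t \<omega>)) + real (snd (W t \<omega>))))"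
    using int_D2[of t] int_S[of t] by (simp add: Sr_fun Dr_fun)
  have "(\<integral>\<omega>. (Dr (Suc t) \<omega>)^2 \<partial>M) = (\<integral>\<omega>. \<beta>^2 * (Dr t \<omega>)^2 + C2 * Sr t \<omega> \<partial>M)"
    using RK(2)[where F="\<lambda>w s. (real (fst s) - real (snd s))^2" and t=t and B=UNIV, OF _ Gnn2 inner_D2 intG]
    by (simp add: Sr_fun Dr_fun)
  also have "\<dots> = \<beta>^2 * (\<integral>\<omega>. (Dr t \<omega>)^2 \<partial>M) + C2 * \<alpha>^t"
    using int_D2[of t] int_S[of t] E_S[of t] by simp
  finally show ?thesis .
qed

lemma inc_D: "integrable M (\<lambda>\<omega>. (Dr (Suc t) \<omega> - \<beta> * Dr t \<omega>)^2) \<and>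
   (\<integral>\<omega>. (Dr (Suc t) \<omega> - \<beta> * Dr t \<omega>)^2 \<partial>M) = C2 * \<alpha>^t"
proof -
  have intG: "integrable M (\<lambda>\<omega>. C2 * (real (fst (W t \<omega>)) + real (snd (W t \<omega>))))"
    using int_S[of t] by (simp add: Sr_fun)
  note R = RK[where F="\<lambda>w s. (real (fst s) - real (snd s) - \<beta> * (real (fst w) - real (snd w)))^2" and t=t, OF _ Gnn3 inner_D4 intG]
  have "integrable M (\<lambda>\<omega>. (Dr (Suc t) \<omega> - \<beta> * Dr t \<omega>)^2)"
    using R(1) by (simp add: Dr_fun)
  moreover have "(\<integral>\<omega>. (Dr (Suc t) \<omega> - \<beta> * Dr t \<omega>)^2 \<partial>M) = (\<integral>\<omega>. C2 * Sr t \<omega> \<partial>M)"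
    using R(2)[where B=UNIV] by (simp add: Sr_fun Dr_fun)
  ultimately show ?thesis using E_S[of t] by simp
qed

end

context gwp
begin

abbreviation "G \<equiv> gen_filtration M W"
abbreviation "gen t \<equiv> {W k -` A \<inter> space M | k A. k \<le> t}"

lemma gen_Pow: "gen t \<subseteq> Pow (space M)" by auto

lemma G_space: "space (G t) = space M"
  unfolding gen_filtration_def using gen_Pow by (simp add: space_measure_of_conv)

lemma G_sets: "sets (G t) = sigma_sets (space M) (gen t)"
  unfolding gen_filtration_def using gen_Pow by (simp add: sets_measure_of)

lemma hist_nth_le: "k \<le> t \<Longrightarrow> hist t \<omega> ! k = W k \<omega>"
  unfolding hist_def by (simp add: nth_map less_Suc_eq_le del: upt_Suc)

lemma G_hist: "A \<in> sets (G t) \<Longrightarrow> \<exists>B. A = hist t -` B \<inter> space M"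
proof -
  let ?V = "vimage_algebra (space M) (hist t) (count_space UNIV)"
  have V: "sets ?V = {hist t -` B \<inter> space M | B. B \<in> UNIV}"
    by (subst sets_vimage_algebra2) auto
  have "gen t \<subseteq> sets ?V"
  proof
    fix X assume "X \<in> gen t"
    then obtain k A where kA: "k \<le> t" "X = W k -` A \<inter> space M" by auto
    then have "X = hist t -` {hs. hs ! k \<in> A} \<inter> space M" by (auto simp: hist_nth_le)
    then show "X \<in> sets ?V" unfolding V by blast
  qed
  then have "sigma_sets (space M) (gen t) \<subseteq> sets ?V"
    using sigma_algebra.sigma_sets_subset[OF sets.sigma_algebra_axioms[of ?V]] by simp
  moreover assume "A \<in> sets (G t)"
  ultimately show ?thesis unfolding G_sets V by blast
qed

lemma G_subalg: "subalgebra M (G t)"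
proof -
  have "sets (G t) \<subseteq> sets M"
  proof
    fix A assume "A \<in> sets (G t)"
    then obtain B where "A = hist t -` B \<inter> space M" using G_hist by blast
    then show "A \<in> sets M" by (simp add: measurable_sets[OF hist_meas])
  qed
  then show ?thesis by (simp add: subalgebra_def G_space)
qed

lemma G_mono: "sets (G t) \<subseteq> sets (G (Suc t))"
  unfolding G_sets by (intro sigma_sets_mono') (auto intro: le_SucI)

lemma W_G_meas: "W t \<in> G t \<rightarrow>\<^sub>M count_space UNIV"
proof (subst measurable_count_space_eq2_countable, safe)
  fix s
  have "W t -` {s} \<inter> space M \<in> gen t" by blast
  then show "W t -` {s} \<inter> space (G t) \<in> sets (G t)"
    unfolding G_space G_sets by auto
qed auto

lemma fun_G_meas: "(\<lambda>\<omega>. \<phi> (W t \<omega>) :: real) \<in> borel_measurable (G t)"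
  using measurable_compose[OF W_G_meas, of \<phi> borel] by simp

lemma mart_from:
  fixes X :: "nat \<Rightarrow> 'w \<Rightarrow> real" and \<phi> :: "nat \<Rightarrow> nat \<times> nat \<Rightarrow> real"
  assumes X: "\<And>t. X t = (\<lambda>\<omega>. \<phi> t (W t \<omega>))"
    and int: "\<And>t. integrable M (X t)"
    and eq: "\<And>t B. (\<integral>\<omega>. indicator B (hist t \<omega>) * X (Suc t) \<omega> \<partial>M) = (\<integral>\<omega>. indicator B (hist t \<omega>) * X t \<omega> \<partial>M)"
  shows "martingale M G X"
  unfolding martingale_def
proof (intro allI conjI)
  fix t
  show "subalgebra M (G t)" by (rule G_subalg)
  show "sets (G t) \<subseteq> sets (G (Suc t))" by (rule G_mono)
  show Xm: "X t \<in> borel_measurable (G t)" unfolding X by (rule fun_G_meas)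
  show "integrable M (X t)" by (rule int)
  interpret S: finite_measure_subalgebra M "G t"
    by unfold_locales (rule G_subalg)
  show "AE \<omega> in M. real_cond_exp M (G t) (X (Suc t)) \<omega> = X t \<omega>"
  proof (rule S.real_cond_exp_charact)
    fix A assume "A \<in> sets (G t)"
    then obtain B where A: "A = hist t -` B \<inter> space M" using G_hist by blast
    have "(\<integral>x\<in>A. X (Suc t) x \<partial>M) = (\<integral>\<omega>. indicator B (hist t \<omega>) * X (Suc t) \<omega> \<partial>M)"
      unfolding set_lebesgue_integral_def A
      by (rule Bochner_Integration.integral_cong) (auto split: split_indicator)
    also have "\<dots> = (\<integral>\<omega>. indicator B (hist t \<omega>) * X t \<omega> \<partial>M)" by (rule eq)
    also have "\<dots> = (\<integral>x\<in>A. X t x \<partial>M)"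
      unfolding set_lebesgue_integral_def A
      by (rule Bochner_Integration.integral_cong) (auto split: split_indicator)
    finally show "(\<integral>x\<in>A. X (Suc t) x \<partial>M) = (\<integral>x\<in>A. X t x \<partial>M)" .
  qed (auto simp: int Xm)
qed

end

context gwp
begin

lemma ind_meas[measurable]: "(\<lambda>\<omega>. indicator B (hist t \<omega>) :: real) \<in> borel_measurable M"
  using measurable_compose[OF hist_meas, of "indicator B" borel] by simp

lemma int_ind: "integrable M f \<Longrightarrow> integrable M (\<lambda>\<omega>. indicator B (hist t \<omega>) * f \<omega> :: real)"
  by (rule Bochner_Integration.integrable_bound[of M f]) (auto split: split_indicator)

lemma int_x: "integrable M (\<lambda>\<omega>. real (fst (W t \<omega>)))"
  by (rule Bochner_Integration.integrable_bound[OF int_S[of t]]) (auto simp: Sr_def)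
lemma int_y: "integrable M (\<lambda>\<omega>. real (snd (W t \<omega>)))"
  by (rule Bochner_Integration.integrable_bound[OF int_S[of t]]) (auto simp: Sr_def)
lemma int_D: "integrable M (Dr t)"
  unfolding Dr_fun using int_x int_y by (rule Bochner_Integration.integrable_diff)

lemma Gnn_U: "0 \<le> real (fst w) * A1 + real (snd w) * A2" using A1_nonneg A2_nonneg by simp
lemma Gnn_V: "0 \<le> real (fst w) * A2 + real (snd w) * A1" using A1_nonneg A2_nonneg by simp
lemma Gnn_S: "0 \<le> \<alpha> * (real (fst w) + real (snd w))" using alpha_pos by simp

lemma KS: "(\<integral>\<omega>. indicator B (hist t \<omega>) * Sr (Suc t) \<omega> \<partial>M) = \<alpha> * (\<integral>\<omega>. indicator B (hist t \<omega>) * Sr t \<omega> \<partial>M)"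
proof -
  have intG: "integrable M (\<lambda>\<omega>. \<alpha> * (real (fst (W t \<omega>)) + real (snd (W t \<omega>))))"
    using int_S[of t] by (simp add: Sr_fun)
  have "(\<integral>\<omega>. indicator B (hist t \<omega>) * Sr (Suc t) \<omega> \<partial>M) = (\<integral>\<omega>. \<alpha> * (indicator B (hist t \<omega>) * Sr t \<omega>) \<partial>M)"
    using RK(2)[where F="\<lambda>w s. real (fst s) + real (snd s)" and t=t and B=B, OF _ Gnn_S inner_S intG]
    by (simp add: Sr_fun mult.left_commute)
  then show ?thesis by simp
qed

lemma KD: "(\<integral>\<omega>. indicator B (hist t \<omega>) * Dr (Suc t) \<omega> \<partial>M) = \<beta> * (\<integral>\<omega>. indicator B (hist t \<omega>) * Dr t \<omega> \<partial>M)"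
proof -
  have intGU: "integrable M (\<lambda>\<omega>. real (fst (W t \<omega>)) * A1 + real (snd (W t \<omega>)) * A2)"
    using int_x[of t] int_y[of t] by simp
  have intGV: "integrable M (\<lambda>\<omega>. real (fst (W t \<omega>)) * A2 + real (snd (W t \<omega>)) * A1)"
    using int_x[of t] int_y[of t] by simp
  have KU: "(\<integral>\<omega>. indicator B (hist t \<omega>) * real (fst (W (Suc t) \<omega>)) \<partial>M) =
        (\<integral>\<omega>. indicator B (hist t \<omega>) * (real (fst (W t \<omega>)) * A1 + real (snd (W t \<omega>)) * A2) \<partial>M)"
    using RK(2)[where F="\<lambda>w s. real (fst s)" and t=t and B=B, OF _ Gnn_U inner_U intGU] by simp
  have KV: "(\<integral>\<omega>. indicator B (hist t \<omega>) * real (snd (W (Suc t) \<omega>)) \<partial>M) =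
        (\<integral>\<omega>. indicator B (hist t \<omega>) * (real (fst (W t \<omega>)) * A2 + real (snd (W t \<omega>)) * A1) \<partial>M)"
    using RK(2)[where F="\<lambda>w s. real (snd s)" and t=t and B=B, OF _ Gnn_V inner_V intGV] by simp
  have "(\<integral>\<omega>. indicator B (hist t \<omega>) * Dr (Suc t) \<omega> \<partial>M) =
     (\<integral>\<omega>. indicator B (hist t \<omega>) * real (fst (W (Suc t) \<omega>)) \<partial>M) - (\<integral>\<omega>. indicator B (hist t \<omega>) * real (snd (W (Suc t) \<omega>)) \<partial>M)"
    unfolding Dr_fun using int_ind[OF int_x[of "Suc t"]] int_ind[OF int_y[of "Suc t"]]
    by (simp add: right_diff_distrib)
  also have "\<dots> = (\<integral>\<omega>. indicator B (hist t \<omega>) * (real (fst (W t \<omega>)) * A1 + real (snd (W t \<omega>)) * A2) -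
       indicator B (hist t \<omega>) * (real (fst (W t \<omega>)) * A2 + real (snd (W t \<omega>)) * A1) \<partial>M)"
    unfolding KU KV using int_ind[OF intGU] int_ind[OF intGV] by simp
  also have "\<dots> = (\<integral>\<omega>. (A1 - A2) * (indicator B (hist t \<omega>) * Dr t \<omega>) \<partial>M)"
    by (rule Bochner_Integration.integral_cong) (auto simp: Dr_def algebra_simps)
  finally show ?thesis by (simp add: A_diff)
qed

lemma mart_M: "martingale M G (\<lambda>t \<omega>. (real (fst (W t \<omega>)) + real (snd (W t \<omega>))) / \<alpha> ^ t)"
proof (rule mart_from[where \<phi>="\<lambda>t w. (real (fst w) + real (snd w)) / \<alpha> ^ t"])
  fix t
  show "integrable M (\<lambda>\<omega>. (real (fst (W t \<omega>)) + real (snd (W t \<omega>))) / \<alpha> ^ t)"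
    using int_S[of t] by (simp add: Sr_fun)
  fix B
  have "(\<integral>\<omega>. indicator B (hist t \<omega>) * (Sr (Suc t) \<omega> / \<alpha> ^ Suc t) \<partial>M) =
        (\<integral>\<omega>. indicator B (hist t \<omega>) * Sr (Suc t) \<omega> \<partial>M) / \<alpha> ^ Suc t"
    by (simp add: mult.commute)
  also have "\<dots> = (\<integral>\<omega>. indicator B (hist t \<omega>) * Sr t \<omega> \<partial>M) / \<alpha> ^ t"
    using alpha_pos by (simp add: KS)
  also have "\<dots> = (\<integral>\<omega>. indicator B (hist t \<omega>) * (Sr t \<omega> / \<alpha> ^ t) \<partial>M)"
    by (simp add: mult.commute)
  finally show "(\<integral>\<omega>. indicator B (hist t \<omega>) * ((real (fst (W (Suc t) \<omega>)) + real (snd (W (Suc t) \<omega>))) / \<alpha> ^ Suc t) \<partial>M) =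
       (\<integral>\<omega>. indicator B (hist t \<omega>) * ((real (fst (W t \<omega>)) + real (snd (W t \<omega>))) / \<alpha> ^ t) \<partial>M)"
    by (simp add: Sr_def)
qed simp

lemma mart_D:
  assumes "\<beta> \<noteq> 0"
  shows "martingale M G (\<lambda>t \<omega>. (real (fst (W t \<omega>)) - real (snd (W t \<omega>))) / \<beta> ^ t)"
proof (rule mart_from[where \<phi>="\<lambda>t w. (real (fst w) - real (snd w)) / \<beta> ^ t"])
  fix t
  show "integrable M (\<lambda>\<omega>. (real (fst (W t \<omega>)) - real (snd (W t \<omega>))) / \<beta> ^ t)"
    using int_D[of t] by (simp add: Dr_fun)
  fix B
  have "(\<integral>\<omega>. indicator B (hist t \<omega>) * (Dr (Suc t) \<omega> / \<beta> ^ Suc t) \<partial>M) =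
        (\<integral>\<omega>. indicator B (hist t \<omega>) * Dr (Suc t) \<omega> \<partial>M) / \<beta> ^ Suc t"
    by (simp add: mult.commute)
  also have "\<dots> = (\<integral>\<omega>. indicator B (hist t \<omega>) * Dr t \<omega> \<partial>M) / \<beta> ^ t"
    using assms by (simp add: KD)
  also have "\<dots> = (\<integral>\<omega>. indicator B (hist t \<omega>) * (Dr t \<omega> / \<beta> ^ t) \<partial>M)"
    by (simp add: mult.commute)
  finally show "(\<integral>\<omega>. indicator B (hist t \<omega>) * ((real (fst (W (Suc t) \<omega>)) - real (snd (W (Suc t) \<omega>))) / \<beta> ^ Suc t) \<partial>M) =
       (\<integral>\<omega>. indicator B (hist t \<omega>) * ((real (fst (W t \<omega>)) - real (snd (W t \<omega>))) / \<beta> ^ t) \<partial>M)"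
    by (simp add: Dr_def)
qed simp

end

lemma UI_L2:
  fixes X :: "nat \<Rightarrow> 'w \<Rightarrow> real"
  assumes int: "\<And>t. integrable M (X t)" and int2: "\<And>t. integrable M (\<lambda>\<omega>. (X t \<omega>)\<^sup>2)"
    and bnd: "\<And>t. (\<integral>\<omega>. (X t \<omega>)\<^sup>2 \<partial>M) \<le> K"
  shows "uniformly_integrable M X"
  unfolding uniformly_integrable_def
proof (intro conjI allI impI)
  fix t show "integrable M (X t)" by (rule int)
next
  fix \<epsilon> :: real assume \<epsilon>: "\<epsilon> > 0"
  define c where "c = (\<bar>K\<bar> + 1) / \<epsilon>"
  have c: "c > 0" using \<epsilon> by (simp add: c_def add_pos_nonneg)
  show "\<exists>K. \<forall>t. (\<integral>\<omega>. (if \<bar>X t \<omega>\<bar> \<ge> K then \<bar>X t \<omega>\<bar> else 0) \<partial>M) \<le> \<epsilon>"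
  proof (intro exI allI)
    fix t
    have [measurable]: "X t \<in> borel_measurable M" using int by auto
    have pt: "(if \<bar>X t \<omega>\<bar> \<ge> c then \<bar>X t \<omega>\<bar> else 0) \<le> (X t \<omega>)\<^sup>2 / c" for \<omega>
    proof (cases "\<bar>X t \<omega>\<bar> \<ge> c")
      case True
      then have "\<bar>X t \<omega>\<bar> * c \<le> \<bar>X t \<omega>\<bar> * \<bar>X t \<omega>\<bar>" by (intro mult_left_mono) auto
      then show ?thesis using True c by (simp add: field_simps power2_eq_square)
    qed (use c in auto)
    have "(\<integral>\<omega>. (if \<bar>X t \<omega>\<bar> \<ge> c then \<bar>X t \<omega>\<bar> else 0) \<partial>M) \<le> (\<integral>\<omega>. (X t \<omega>)\<^sup>2 / c \<partial>M)"
    proof (rule integral_mono)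
      show "integrable M (\<lambda>\<omega>. if \<bar>X t \<omega>\<bar> \<ge> c then \<bar>X t \<omega>\<bar> else 0)"
        by (rule Bochner_Integration.integrable_bound[OF int[of t]]) auto
    qed (use int2 pt in auto)
    also have "\<dots> = (\<integral>\<omega>. (X t \<omega>)\<^sup>2 \<partial>M) / c" by simp
    also have "\<dots> \<le> K / c" using bnd[of t] c by (simp add: divide_right_mono)
    also have "\<dots> \<le> \<epsilon>"
    proof -
      have "K * \<epsilon> \<le> \<epsilon> * \<bar>K\<bar>" using \<epsilon> mult_right_mono[of K "\<bar>K\<bar>" \<epsilon>] by (simp add: mult.commute)
      then have "K * \<epsilon> \<le> \<epsilon> + \<epsilon> * \<bar>K\<bar>" using \<epsilon> by linarith
      then show ?thesis using c \<epsilon> by (simp add: c_def field_simps)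
    qed
    finally show "(\<integral>\<omega>. (if \<bar>X t \<omega>\<bar> \<ge> c then \<bar>X t \<omega>\<bar> else 0) \<partial>M) \<le> \<epsilon>" .
  qed
qed

lemma CS_series:
  fixes a b :: "nat \<Rightarrow> real"
  assumes "summable (\<lambda>k. (a k)\<^sup>2)" "summable (\<lambda>k. (b k)\<^sup>2)" "summable (\<lambda>k. a k * b k)"
  shows "(\<Sum>k. a k * b k)\<^sup>2 \<le> (\<Sum>k. (a k)\<^sup>2) * (\<Sum>k. (b k)\<^sup>2)"
proof -
  have lim: "(\<lambda>N. (\<Sum>k<N. a k * b k)\<^sup>2) \<longlonglongrightarrow> (\<Sum>k. a k * b k)\<^sup>2"
    by (intro tendsto_power summable_LIMSEQ assms)
  show ?thesis
  proof (rule LIMSEQ_le_const2[OF lim], intro exI allI impI)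
    fix N :: nat
    have "(\<Sum>k<N. a k * b k)\<^sup>2 \<le> (\<Sum>k<N. (a k)\<^sup>2) * (\<Sum>k<N. (b k)\<^sup>2)"
      by (rule Cauchy_Schwarz_ineq_sum)
    also have "\<dots> \<le> (\<Sum>k. (a k)\<^sup>2) * (\<Sum>k. (b k)\<^sup>2)"
      using assms by (intro mult_mono sum_le_suminf suminf_nonneg sum_nonneg) auto
    finally show "(\<Sum>k<N. a k * b k)\<^sup>2 \<le> (\<Sum>k. (a k)\<^sup>2) * (\<Sum>k. (b k)\<^sup>2)" .
  qed
qed


context gwp
begin

lemma ES2_form: "(\<integral>\<omega>. (Sr t \<omega>)\<^sup>2 \<partial>M) / \<alpha> ^ (2 * t) = 1 + C1 / \<alpha>\<^sup>2 * (\<Sum>k<t. (1 / \<alpha>) ^ k)"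
proof (induction t)
  case 0
  then show ?case using W0_fun[of "\<lambda>w. (real (fst w) + real (snd w))^2"] by (simp add: Sr_fun)
next
  case (Suc t)
  have ap: "\<alpha> > 0" by (rule alpha_pos)
  have "(\<integral>\<omega>. (Sr (Suc t) \<omega>)\<^sup>2 \<partial>M) / \<alpha> ^ (2 * Suc t) = (\<alpha>^2 * (\<integral>\<omega>. (Sr t \<omega>)^2 \<partial>M) + C1 * \<alpha>^t) / (\<alpha>^2 * \<alpha> ^ (2 * t))"
  proof -
    have "\<alpha> ^ (2 * Suc t) = \<alpha>^2 * \<alpha>^(2*t)" by (simp add: mult_Suc_right power_add power2_eq_square)
    then show ?thesis by (simp only: rec_S2)
  qed
  also have "\<dots> = (\<integral>\<omega>. (Sr t \<omega>)^2 \<partial>M) / \<alpha> ^ (2 * t) + C1 / \<alpha>\<^sup>2 * (\<alpha>^t / \<alpha> ^ (2 * t))"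
    using ap by (simp add: field_simps)
  also have "\<alpha>^t / \<alpha> ^ (2 * t) = (1 / \<alpha>) ^ t"
    using ap by (simp add: power_mult power2_eq_square power_mult_distrib field_simps power_divide)
  finally show ?case using Suc by (simp add: algebra_simps)
qed

lemma ED2_form:
  assumes "\<beta> \<noteq> 0"
  shows "(\<integral>\<omega>. (Dr t \<omega>)\<^sup>2 \<partial>M) / \<beta> ^ (2 * t) = 1 + C2 / \<beta>\<^sup>2 * (\<Sum>k<t. (\<alpha> / \<beta>\<^sup>2) ^ k)"
proof (induction t)
  case 0
  then show ?case using W0_fun[of "\<lambda>w. (real (fst w) - real (snd w))^2"] by (simp add: Dr_fun)
next
  case (Suc t)
  have "(\<integral>\<omega>. (Dr (Suc t) \<omega>)\<^sup>2 \<partial>M) / \<beta> ^ (2 * Suc t) = (\<beta>^2 * (\<integral>\<omega>. (Dr t \<omega>)^2 \<partial>M) + C2 * \<alpha>^t) / (\<beta>^2 * \<beta> ^ (2 * t))"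
  proof -
    have "\<beta> ^ (2 * Suc t) = \<beta>^2 * \<beta>^(2*t)" by (simp add: mult_Suc_right power_add power2_eq_square)
    then show ?thesis by (simp only: rec_D2)
  qed
  also have "\<dots> = (\<integral>\<omega>. (Dr t \<omega>)^2 \<partial>M) / \<beta> ^ (2 * t) + C2 / \<beta>\<^sup>2 * (\<alpha>^t / \<beta> ^ (2 * t))"
    using assms by (simp add: field_simps)
  also have "\<alpha>^t / \<beta> ^ (2 * t) = (\<alpha> / \<beta>\<^sup>2) ^ t"
    using assms by (simp add: power_mult power_divide)
  finally show ?case using Suc by (simp add: algebra_simps)
qed

lemma geo_bound: "0 \<le> x \<Longrightarrow> x < 1 \<Longrightarrow> (\<Sum>k<t. x ^ k) \<le> 1 / (1 - x)"
  for x :: real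
proof -
  assume x: "0 \<le> x" "x < 1"
  have "(\<Sum>k<t. x^k) = (1 - x^t) / (1 - x)" using x by (simp add: sum_gp_strict)
  also have "\<dots> \<le> 1 / (1 - x)" using x by (intro divide_right_mono) auto
  finally show ?thesis .
qed

lemma MM_L2:
  assumes "\<alpha> > 1"
  shows "integrable M (\<lambda>\<omega>. ((real (fst (W t \<omega>)) + real (snd (W t \<omega>))) / \<alpha> ^ t)\<^sup>2)"
    "(\<integral>\<omega>. ((real (fst (W t \<omega>)) + real (snd (W t \<omega>))) / \<alpha> ^ t)\<^sup>2 \<partial>M) \<le> 1 + C1 / \<alpha>\<^sup>2 * (1 / (1 - 1 / \<alpha>))"
proof -
  have eq: "(\<lambda>\<omega>. ((real (fst (W t \<omega>)) + real (snd (W t \<omega>))) / \<alpha> ^ t)\<^sup>2) = (\<lambda>\<omega>. (Sr t \<omega>)\<^sup>2 / \<alpha> ^ (2 * t))"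
    by (simp add: Sr_fun power_divide power_mult fun_eq_iff power2_eq_square mult.commute)
  show "integrable M (\<lambda>\<omega>. ((real (fst (W t \<omega>)) + real (snd (W t \<omega>))) / \<alpha> ^ t)\<^sup>2)"
    unfolding eq using int_S2[of t] by simp
  have "(\<integral>\<omega>. ((real (fst (W t \<omega>)) + real (snd (W t \<omega>))) / \<alpha> ^ t)\<^sup>2 \<partial>M) = 1 + C1 / \<alpha>\<^sup>2 * (\<Sum>k<t. (1 / \<alpha>) ^ k)"
    unfolding eq using ES2_form[of t] by simp
  also have "\<dots> \<le> 1 + C1 / \<alpha>\<^sup>2 * (1 / (1 - 1 / \<alpha>))"
    using assms C1_nonneg geo_bound[of "1/\<alpha>" t] by (intro add_left_mono mult_left_mono) auto
  finally show "(\<integral>\<omega>. ((real (fst (W t \<omega>)) + real (snd (W t \<omega>))) / \<alpha> ^ t)\<^sup>2 \<partial>M) \<le> 1 + C1 / \<alpha>\<^sup>2 * (1 / (1 - 1 / \<alpha>))" .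
qed

lemma DD_L2:
  assumes "\<beta>\<^sup>2 > \<alpha>"
  shows "integrable M (\<lambda>\<omega>. ((real (fst (W t \<omega>)) - real (snd (W t \<omega>))) / \<beta> ^ t)\<^sup>2)"
    "(\<integral>\<omega>. ((real (fst (W t \<omega>)) - real (snd (W t \<omega>))) / \<beta> ^ t)\<^sup>2 \<partial>M) \<le> 1 + C2 / \<beta>\<^sup>2 * (1 / (1 - \<alpha> / \<beta>\<^sup>2))"
proof -
  have b0: "\<beta> \<noteq> 0" using assms alpha_pos by auto
  have eq: "(\<lambda>\<omega>. ((real (fst (W t \<omega>)) - real (snd (W t \<omega>))) / \<beta> ^ t)\<^sup>2) = (\<lambda>\<omega>. (Dr t \<omega>)\<^sup>2 / \<beta> ^ (2 * t))"
    by (simp add: Dr_fun power_divide power_mult fun_eq_iff power2_eq_square mult.commute)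
  show "integrable M (\<lambda>\<omega>. ((real (fst (W t \<omega>)) - real (snd (W t \<omega>))) / \<beta> ^ t)\<^sup>2)"
    unfolding eq using int_D2[of t] by simp
  have "(\<integral>\<omega>. ((real (fst (W t \<omega>)) - real (snd (W t \<omega>))) / \<beta> ^ t)\<^sup>2 \<partial>M) = 1 + C2 / \<beta>\<^sup>2 * (\<Sum>k<t. (\<alpha> / \<beta>\<^sup>2) ^ k)"
    unfolding eq using ED2_form[OF b0, of t] by simp
  also have "\<dots> \<le> 1 + C2 / \<beta>\<^sup>2 * (1 / (1 - \<alpha> / \<beta>\<^sup>2))"
  proof -
    have "\<beta>\<^sup>2 > 0" using assms alpha_pos by linarith
    then have "\<alpha> / \<beta>\<^sup>2 < 1" using assms by (subst divide_less_eq_1_pos) auto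
    then show ?thesis
      using assms C2_nonneg geo_bound[of "\<alpha> / \<beta>\<^sup>2" t] alpha_pos by (intro add_left_mono mult_left_mono) auto
  qed
  finally show "(\<integral>\<omega>. ((real (fst (W t \<omega>)) - real (snd (W t \<omega>))) / \<beta> ^ t)\<^sup>2 \<partial>M) \<le> 1 + C2 / \<beta>\<^sup>2 * (1 / (1 - \<alpha> / \<beta>\<^sup>2))" .
qed

end

locale gwc = gwp +
  assumes bb: "\<beta>\<^sup>2 > \<alpha>"
begin

lemma b_pos: "\<beta> > 0"
proof -
  have "\<beta>\<^sup>2 > 0" using bb alpha_pos by linarith
  then have "\<beta> \<noteq> 0" by auto
  then show ?thesis using beta_nonneg by auto
qed

definition "\<rho> = \<alpha> / \<beta>\<^sup>2"
definition "q = (1 + \<rho>) / 2"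

lemma rho_pos: "\<rho> > 0" using alpha_pos b_pos by (simp add: \<rho>_def)
lemma rho_lt1: "\<rho> < 1" using bb b_pos by (simp add: \<rho>_def)
lemma q_pos: "q > 0" using rho_pos by (simp add: q_def)
lemma q_lt1: "q < 1" using rho_lt1 by (simp add: q_def)
lemma rho_q: "\<rho> < q" using rho_lt1 by (simp add: q_def)
lemma rq_pos: "\<rho> / q > 0" using rho_pos q_pos by simp
lemma rq_lt1: "\<rho> / q < 1" using rho_q q_pos by simp

definition "DD t \<omega> = Dr t \<omega> / \<beta> ^ t"
definition "Inc k \<omega> = DD (Suc k) \<omega> - DD k \<omega>"
definition "J k \<omega> = (Inc k \<omega>)\<^sup>2 / q ^ k"
definition "Dinf \<omega> = lim (\<lambda>t. DD t \<omega>)"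

lemma DD_meas[measurable]: "DD t \<in> borel_measurable M" unfolding DD_def by measurable
lemma Inc_meas[measurable]: "Inc k \<in> borel_measurable M" unfolding Inc_def by measurable
lemma J_meas[measurable]: "J k \<in> borel_measurable M" unfolding J_def by measurable
lemma Dinf_meas[measurable]: "Dinf \<in> borel_measurable M" unfolding Dinf_def by measurable

lemma J_nonneg: "J k \<omega> \<ge> 0" unfolding J_def using q_pos by simp

lemma DD0: "\<omega> \<in> space M \<Longrightarrow> DD 0 \<omega> = 1" by (simp add: DD_def Dr0)

lemma int_DD: "integrable M (DD t)" unfolding DD_def using int_D[of t] by simp
lemma int_Inc: "integrable M (Inc k)" unfolding Inc_def using int_DD by simp

lemma Inc_eq: "Inc k \<omega> = (Dr (Suc k) \<omega> - \<beta> * Dr k \<omega>) / \<beta> ^ Suc k"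
  unfolding Inc_def DD_def using b_pos by (simp add: field_simps)

lemma Inc2: "integrable M (\<lambda>\<omega>. (Inc k \<omega>)\<^sup>2) \<and> (\<integral>\<omega>. (Inc k \<omega>)\<^sup>2 \<partial>M) = C2 / \<beta>\<^sup>2 * \<rho> ^ k"
proof -
  have eq: "(\<lambda>\<omega>. (Inc k \<omega>)\<^sup>2) = (\<lambda>\<omega>. (Dr (Suc k) \<omega> - \<beta> * Dr k \<omega>)\<^sup>2 / (\<beta> ^ Suc k)\<^sup>2)"
    by (simp add: Inc_eq power_divide)
  have "C2 * \<alpha> ^ k / (\<beta> ^ Suc k)\<^sup>2 = C2 / \<beta>\<^sup>2 * \<rho> ^ k"
    using b_pos by (simp add: \<rho>_def power_divide power_mult_distrib field_simps power2_eq_square power_mult[symmetric])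
  then show ?thesis unfolding eq using inc_D[of k] by simp
qed

lemma J_int: "integrable M (J k) \<and> (\<integral>\<omega>. J k \<omega> \<partial>M) = C2 / \<beta>\<^sup>2 * (\<rho> / q) ^ k"
proof -
  have "integrable M (J k)" unfolding J_def using Inc2[of k] by simp
  moreover have "(\<integral>\<omega>. J k \<omega> \<partial>M) = C2 / \<beta>\<^sup>2 * \<rho> ^ k / q ^ k"
    unfolding J_def using Inc2[of k] by simp
  ultimately show ?thesis by (simp add: power_divide)
qed

lemma J_summable_int: "summable (\<lambda>k. \<integral>\<omega>. J k \<omega> \<partial>M)"
  using J_int rq_pos rq_lt1 rho_pos q_pos by (simp add: summable_geometric)

lemma AE_J: "AE \<omega> in M. summable (\<lambda>k. J k \<omega>)"
proof -
  have "(\<integral>\<^sup>+\<omega>. (\<Sum>k. ennreal (J k \<omega>)) \<partial>M) = (\<Sum>k. \<integral>\<^sup>+\<omega>. ennreal (J k \<omega>) \<partial>M)"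
    by (rule nn_integral_suminf) auto
  also have "\<dots> = (\<Sum>k. ennreal (\<integral>\<omega>. J k \<omega> \<partial>M))"
    using J_int J_nonneg by (intro suminf_cong nn_integral_eq_integral) auto
  also have "\<dots> = ennreal (\<Sum>k. \<integral>\<omega>. J k \<omega> \<partial>M)"
    using J_summable_int J_nonneg by (intro suminf_ennreal2 integral_nonneg_AE) auto
  finally have "(\<integral>\<^sup>+\<omega>. (\<Sum>k. ennreal (J k \<omega>)) \<partial>M) \<noteq> \<infinity>" by simp
  then have "AE \<omega> in M. (\<Sum>k. ennreal (J k \<omega>)) \<noteq> \<infinity>"
    by (intro nn_integral_PInf_AE) auto
  then show ?thesis
    by eventually_elim (use J_nonneg in \<open>auto intro: summable_suminf_not_top\<close>)
qed

lemma amgm: "\<bar>x * y\<bar> \<le> (x\<^sup>2 / c + c * y\<^sup>2) / 2" if "c > 0" for x y c :: real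
proof -
  have h: "x\<^sup>2 + c\<^sup>2 * y\<^sup>2 - 2 * c * (\<bar>x\<bar> * \<bar>y\<bar>) = (\<bar>x\<bar> - c * \<bar>y\<bar>)\<^sup>2"
    by (simp add: power2_eq_square algebra_simps)
  have "0 \<le> (\<bar>x\<bar> - c * \<bar>y\<bar>)\<^sup>2" by simp
  then have "2 * c * (\<bar>x\<bar> * \<bar>y\<bar>) \<le> x\<^sup>2 + c\<^sup>2 * y\<^sup>2" using h by linarith
  then have "\<bar>x\<bar> * \<bar>y\<bar> \<le> (x\<^sup>2 + c\<^sup>2 * y\<^sup>2) / (2 * c)" using that by (simp add: field_simps)
  also have "(x\<^sup>2 + c\<^sup>2 * y\<^sup>2) / (2 * c) = (x\<^sup>2 / c + c * y\<^sup>2) / 2" using that by (simp add: field_simps power2_eq_square)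
  finally show ?thesis by (simp add: abs_mult)
qed

lemma Inc_bound: "\<bar>Inc k \<omega>\<bar> \<le> (J k \<omega> + q ^ k) / 2"
proof -
  have "\<bar>Inc k \<omega> * 1\<bar> \<le> ((Inc k \<omega>)\<^sup>2 / q ^ k + q ^ k * 1\<^sup>2) / 2"
    by (rule amgm) (use q_pos in simp)
  then show ?thesis by (simp add: J_def)
qed

definition "good \<omega> \<longleftrightarrow> \<omega> \<in> space M \<and> summable (\<lambda>k. J k \<omega>)"

lemma AE_good: "AE \<omega> in M. good \<omega>"
  using AE_J by (auto simp: good_def)

lemma good_abs: "good \<omega> \<Longrightarrow> summable (\<lambda>k. \<bar>Inc k \<omega>\<bar>)"
proof -
  assume "good \<omega>"
  then have s1: "summable (\<lambda>k. J k \<omega>)" by (simp add: good_def)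
  have s2: "summable (\<lambda>k. q ^ k)" using q_pos q_lt1 by (intro summable_geometric) simp
  have "summable (\<lambda>k. (J k \<omega> + q ^ k) / 2)"
    using summable_add[OF s1 s2] by (rule summable_divide)
  then show ?thesis
  proof (rule summable_comparison_test')
    fix k show "norm \<bar>Inc k \<omega>\<bar> \<le> (J k \<omega> + q ^ k) / 2" using Inc_bound[of k \<omega>] by simp
  qed
qed

lemma good_Inc: "good \<omega> \<Longrightarrow> summable (\<lambda>k. Inc k \<omega>)"
  by (rule summable_rabs_cancel[OF good_abs])

lemma DD_tele: "\<omega> \<in> space M \<Longrightarrow> DD t \<omega> = 1 + (\<Sum>k<t. Inc k \<omega>)"
  unfolding Inc_def by (subst sum_lessThan_telescope) (simp add: DD0)

lemma good_lim: "good \<omega> \<Longrightarrow> (\<lambda>t. DD t \<omega>) \<longlonglongrightarrow> 1 + (\<Sum>k. Inc k \<omega>)"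
proof -
  assume g: "good \<omega>"
  then have "(\<lambda>t. 1 + (\<Sum>k<t. Inc k \<omega>)) \<longlonglongrightarrow> 1 + (\<Sum>k. Inc k \<omega>)"
    by (intro tendsto_add tendsto_const summable_LIMSEQ good_Inc)
  moreover have "\<omega> \<in> space M" using g by (simp add: good_def)
  ultimately show ?thesis by (simp add: DD_tele)
qed

lemma good_Dinf: "good \<omega> \<Longrightarrow> Dinf \<omega> = 1 + (\<Sum>k. Inc k \<omega>)"
  unfolding Dinf_def using good_lim by (rule limI)

lemma AE_conv: "AE \<omega> in M. (\<lambda>t. DD t \<omega>) \<longlonglongrightarrow> Dinf \<omega>"
  using AE_good by eventually_elim (simp add: good_Dinf good_lim)

end

context gwc
begin

definition "R t \<omega> = (\<Sum>k. J (k + t) \<omega>)"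

lemma J_shift: "summable (\<lambda>k. J k \<omega>) \<Longrightarrow> summable (\<lambda>k. J (k + t) \<omega>)"
  using summable_ignore_initial_segment[of "\<lambda>k. J k \<omega>" t] by simp

lemma good_R: "good \<omega> \<Longrightarrow> R t \<omega> \<ge> 0"
  unfolding R_def good_def using J_nonneg J_shift by (intro suminf_nonneg) auto

lemma R_meas[measurable]: "R t \<in> borel_measurable M" unfolding R_def by measurable

lemma good_tail:
  assumes g: "good \<omega>"
  shows "(Dinf \<omega> - DD t \<omega>)\<^sup>2 \<le> q ^ t / (1 - q) * R t \<omega>"
proof -
  define r where "r = sqrt q"
  have r: "r > 0" "r\<^sup>2 = q" using q_pos by (auto simp: r_def)
  have sI: "summable (\<lambda>k. Inc k \<omega>)" by (rule good_Inc[OF g])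
  have sA: "summable (\<lambda>k. \<bar>Inc (k + t) \<omega>\<bar>)" using summable_ignore_initial_segment[OF good_abs[OF g]] .
  have sJ: "summable (\<lambda>k. J (k + t) \<omega>)" using g J_shift by (auto simp: good_def)
  have sq: "summable (\<lambda>k. q ^ (k + t))" using q_pos q_lt1 summable_ignore_initial_segment[OF summable_geometric[of q]] by simp
  have diff: "Dinf \<omega> - DD t \<omega> = (\<Sum>k. Inc (k + t) \<omega>)"
    using g by (simp add: good_Dinf DD_tele good_def suminf_minus_initial_segment[OF sI])
  define a where "a = (\<lambda>k. \<bar>Inc (k + t) \<omega>\<bar> / r ^ (k + t))"
  define bb where "bb = (\<lambda>k. r ^ (k + t))"
  have ab: "a k * bb k = \<bar>Inc (k + t) \<omega>\<bar>" for k using r by (simp add: a_def bb_def)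
  have rp2: "(r ^ m)\<^sup>2 = q ^ m" for m
  proof -
    have "(r ^ m)\<^sup>2 = (r\<^sup>2) ^ m" by (simp only: power_mult[symmetric] mult.commute)
    then show ?thesis using r by simp
  qed
  have a2: "(a k)\<^sup>2 = J (k + t) \<omega>" for k
    by (simp add: a_def J_def power_divide rp2)
  have b2: "(bb k)\<^sup>2 = q ^ (k + t)" for k
    by (simp add: bb_def rp2)
  have "(Dinf \<omega> - DD t \<omega>)\<^sup>2 = \<bar>\<Sum>k. Inc (k + t) \<omega>\<bar>\<^sup>2" by (simp add: diff)
  also have "\<dots> \<le> (\<Sum>k. \<bar>Inc (k + t) \<omega>\<bar>)\<^sup>2"
    using summable_rabs[OF sA] by (intro power_mono) auto
  also have "\<dots> = (\<Sum>k. a k * bb k)\<^sup>2" by (simp add: ab)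
  also have "\<dots> \<le> (\<Sum>k. (a k)\<^sup>2) * (\<Sum>k. (bb k)\<^sup>2)"
    by (rule CS_series) (use sA sJ sq in \<open>simp_all add: a2 b2 ab\<close>)
  also have "\<dots> = R t \<omega> * (\<Sum>k. q ^ (k + t))" by (simp add: a2 b2 R_def)
  also have "(\<Sum>k. q ^ (k + t)) = q ^ t / (1 - q)"
  proof -
    have "(\<Sum>k. q ^ (k + t)) = (\<Sum>k. q ^ t * q ^ k)" by (simp add: power_add mult.commute)
    also have "\<dots> = q ^ t * (1 / (1 - q))"
      using q_pos q_lt1 by (subst suminf_mult) (auto intro: summable_geometric simp: suminf_geometric)
    finally show ?thesis by simp
  qed
  finally show ?thesis by (simp add: mult.commute)
qed

lemma R_int: "integrable M (R t) \<and> (\<integral>\<omega>. R t \<omega> \<partial>M) = C2 / \<beta>\<^sup>2 * (\<rho> / q) ^ t / (1 - \<rho> / q)"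
proof -
  have i: "\<And>k. integrable M (J (k + t))" using J_int by blast
  have ae: "AE \<omega> in M. summable (\<lambda>k. norm (J (k + t) \<omega>))"
    using AE_J by eventually_elim (use J_nonneg J_shift in auto)
  have eqk: "(\<integral>\<omega>. norm (J (k + t) \<omega>) \<partial>M) = C2 / \<beta>\<^sup>2 * (\<rho> / q) ^ t * (\<rho> / q) ^ k" for k
    using J_int[of "k + t"] J_nonneg by (simp add: power_add)
  have s: "summable (\<lambda>k. \<integral>\<omega>. norm (J (k + t) \<omega>) \<partial>M)"
    unfolding eqk using rq_pos rq_lt1 by (intro summable_mult summable_geometric) simp
  have "integrable M (R t)" unfolding R_def by (rule integrable_suminf[OF i ae s])
  moreover have "(\<integral>\<omega>. R t \<omega> \<partial>M) = (\<Sum>k. \<integral>\<omega>. J (k + t) \<omega> \<partial>M)"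
    unfolding R_def by (rule integral_suminf[OF i ae s])
  moreover have "(\<Sum>k. \<integral>\<omega>. J (k + t) \<omega> \<partial>M) = C2 / \<beta>\<^sup>2 * (\<rho> / q) ^ t / (1 - \<rho> / q)"
  proof -
    have "(\<Sum>k. \<integral>\<omega>. J (k + t) \<omega> \<partial>M) = (\<Sum>k. C2 / \<beta>\<^sup>2 * (\<rho> / q) ^ t * (\<rho> / q) ^ k)"
      by (intro suminf_cong) (simp add: J_int power_add)
    also have "\<dots> = C2 / \<beta>\<^sup>2 * (\<rho> / q) ^ t * (1 / (1 - \<rho> / q))"
      using rq_pos rq_lt1 by (subst suminf_mult) (auto intro: summable_geometric simp: suminf_geometric)
    finally show ?thesis by simp
  qed
  ultimately show ?thesis by simp
qed

definition "Kc = C2 / \<beta>\<^sup>2 / ((1 - q) * (1 - \<rho> / q))"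

lemma L2_tail: "integrable M (\<lambda>\<omega>. (DD t \<omega> - Dinf \<omega>)\<^sup>2) \<and> (\<integral>\<omega>. (DD t \<omega> - Dinf \<omega>)\<^sup>2 \<partial>M) \<le> Kc * \<rho> ^ t"
proof -
  have iR: "integrable M (\<lambda>\<omega>. q ^ t / (1 - q) * R t \<omega>)" using R_int by simp
  have ae2: "AE \<omega> in M. (DD t \<omega> - Dinf \<omega>)\<^sup>2 \<le> q ^ t / (1 - q) * R t \<omega> \<and> 0 \<le> R t \<omega>"
    using AE_good by eventually_elim (use good_tail good_R in \<open>simp add: power2_commute\<close>)
  then have ae: "AE \<omega> in M. (DD t \<omega> - Dinf \<omega>)\<^sup>2 \<le> q ^ t / (1 - q) * R t \<omega>"
    by eventually_elim simp
  have i: "integrable M (\<lambda>\<omega>. (DD t \<omega> - Dinf \<omega>)\<^sup>2)"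
  proof (rule Bochner_Integration.integrable_bound[OF iR])
    show "AE \<omega> in M. norm ((DD t \<omega> - Dinf \<omega>)\<^sup>2) \<le> norm (q ^ t / (1 - q) * R t \<omega>)"
      using ae2 by eventually_elim (use q_pos q_lt1 in \<open>simp add: abs_mult\<close>)
  qed auto
  have "(\<integral>\<omega>. (DD t \<omega> - Dinf \<omega>)\<^sup>2 \<partial>M) \<le> (\<integral>\<omega>. q ^ t / (1 - q) * R t \<omega> \<partial>M)"
    by (rule integral_mono_AE[OF i iR ae])
  also have "\<dots> = q ^ t / (1 - q) * (C2 / \<beta>\<^sup>2 * (\<rho> / q) ^ t / (1 - \<rho> / q))" using R_int by simp
  also have "\<dots> = Kc * (q ^ t * (\<rho> / q) ^ t)"
    unfolding Kc_def by (simp add: divide_inverse inverse_mult_distrib mult_ac)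
  also have "q ^ t * (\<rho> / q) ^ t = \<rho> ^ t" using q_pos by (simp add: power_divide)
  finally show ?thesis using i by simp
qed

lemma L2_lim: "(\<lambda>t. \<integral>\<omega>. (DD t \<omega> - Dinf \<omega>)\<^sup>2 \<partial>M) \<longlonglongrightarrow> 0"
proof (rule tendsto_sandwich[of "\<lambda>t. 0" _ _ "\<lambda>t. Kc * \<rho> ^ t"])
  show "\<forall>\<^sub>F t in sequentially. 0 \<le> (\<integral>\<omega>. (DD t \<omega> - Dinf \<omega>)\<^sup>2 \<partial>M)" by simp
  show "\<forall>\<^sub>F t in sequentially. (\<integral>\<omega>. (DD t \<omega> - Dinf \<omega>)\<^sup>2 \<partial>M) \<le> Kc * \<rho> ^ t" using L2_tail by simp
  show "(\<lambda>t. Kc * \<rho> ^ t) \<longlonglongrightarrow> 0"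
    using rho_pos rho_lt1 by (intro tendsto_mult_right_zero LIMSEQ_power_zero) simp
qed simp

end

context gwc
begin

lemma DD_lit: "DD t = (\<lambda>\<omega>. (real (fst (W t \<omega>)) - real (snd (W t \<omega>))) / \<beta> ^ t)"
  by (simp add: fun_eq_iff DD_def Dr_def)

definition "KD = 1 + C2 / \<beta>\<^sup>2 * (1 / (1 - \<alpha> / \<beta>\<^sup>2))"

lemma DD2: "integrable M (\<lambda>\<omega>. (DD t \<omega>)\<^sup>2)" "(\<integral>\<omega>. (DD t \<omega>)\<^sup>2 \<partial>M) \<le> KD"
  unfolding DD_lit KD_def using DD_L2[OF bb, of t] by auto

lemma int_Dinf2: "integrable M (\<lambda>\<omega>. (Dinf \<omega>)\<^sup>2)"
proof (rule Bochner_Integration.integrable_bound)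
  show "integrable M (\<lambda>\<omega>. 2 * (DD 0 \<omega> - Dinf \<omega>)\<^sup>2 + 2 * (DD 0 \<omega>)\<^sup>2)"
    using L2_tail[of 0] DD2(1)[of 0] by simp
  show "AE \<omega> in M. norm ((Dinf \<omega>)\<^sup>2) \<le> norm (2 * (DD 0 \<omega> - Dinf \<omega>)\<^sup>2 + 2 * (DD 0 \<omega>)\<^sup>2)"
  proof (rule AE_I2)
    fix \<omega>
    have e: "2 * (DD 0 \<omega> - Dinf \<omega>)\<^sup>2 + 2 * (DD 0 \<omega>)\<^sup>2 - (Dinf \<omega>)\<^sup>2 = (2 * DD 0 \<omega> - Dinf \<omega>)\<^sup>2"
      by (simp add: power2_eq_square algebra_simps)
    have "0 \<le> (2 * DD 0 \<omega> - Dinf \<omega>)\<^sup>2" by simp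
    then have "(Dinf \<omega>)\<^sup>2 \<le> 2 * (DD 0 \<omega> - Dinf \<omega>)\<^sup>2 + 2 * (DD 0 \<omega>)\<^sup>2" using e by linarith
    then show "norm ((Dinf \<omega>)\<^sup>2) \<le> norm (2 * (DD 0 \<omega> - Dinf \<omega>)\<^sup>2 + 2 * (DD 0 \<omega>)\<^sup>2)" by simp
  qed
qed auto

lemma E_Dr: "(\<integral>\<omega>. Dr t \<omega> \<partial>M) = \<beta> ^ t"
proof (induction t)
  case 0
  then show ?case using W0_fun[of "\<lambda>w. real (fst w) - real (snd w)"] by (simp add: Dr_fun)
next
  case (Suc t)
  then show ?case using KD[of UNIV t] by simp
qed

lemma E_DD: "(\<integral>\<omega>. DD t \<omega> \<partial>M) = 1"
  unfolding DD_def using E_Dr[of t] b_pos by simp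

lemma E_Inc: "(\<integral>\<omega>. Inc k \<omega> \<partial>M) = 0"
  unfolding Inc_def using int_DD E_DD by simp

lemma E_Dinf: "(\<integral>\<omega>. Dinf \<omega> \<partial>M) = 1"
proof -
  have i: "\<And>k. integrable M (Inc k)" by (rule int_Inc)
  have ae: "AE \<omega> in M. summable (\<lambda>k. norm (Inc k \<omega>))"
    using AE_good by eventually_elim (simp add: good_abs)
  have b: "(\<integral>\<omega>. norm (Inc k \<omega>) \<partial>M) \<le> ((\<integral>\<omega>. J k \<omega> \<partial>M) + q ^ k) / 2" for k
  proof -
    have "(\<integral>\<omega>. norm (Inc k \<omega>) \<partial>M) \<le> (\<integral>\<omega>. (J k \<omega> + q ^ k) / 2 \<partial>M)"
      using J_int[of k] int_Inc[of k] Inc_bound by (intro integral_mono) auto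
    also have "\<dots> = ((\<integral>\<omega>. J k \<omega> \<partial>M) + q ^ k) / 2"
      using J_int[of k] by (simp add: P.prob_space)
    finally show ?thesis .
  qed
  have s: "summable (\<lambda>k. \<integral>\<omega>. norm (Inc k \<omega>) \<partial>M)"
  proof (rule summable_comparison_test')
    have s2: "summable (\<lambda>k. q ^ k)" using q_pos q_lt1 by (intro summable_geometric) simp
    show "summable (\<lambda>k. ((\<integral>\<omega>. J k \<omega> \<partial>M) + q ^ k) / 2)"
      using summable_add[OF J_summable_int s2] by (rule summable_divide)
    fix k show "norm (\<integral>\<omega>. norm (Inc k \<omega>) \<partial>M) \<le> ((\<integral>\<omega>. J k \<omega> \<partial>M) + q ^ k) / 2"
      using b[of k] by simp
  qed
  have "(\<integral>\<omega>. (\<Sum>k. Inc k \<omega>) \<partial>M) = (\<Sum>k. \<integral>\<omega>. Inc k \<omega> \<partial>M)"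
    by (rule integral_suminf[OF i ae s])
  also have "\<dots> = 0" by (simp add: E_Inc)
  finally have e0: "(\<integral>\<omega>. (\<Sum>k. Inc k \<omega>) \<partial>M) = 0" .
  have iS: "integrable M (\<lambda>\<omega>. \<Sum>k. Inc k \<omega>)" by (rule integrable_suminf[OF i ae s])
  have "(\<integral>\<omega>. Dinf \<omega> \<partial>M) = (\<integral>\<omega>. 1 + (\<Sum>k. Inc k \<omega>) \<partial>M)"
  proof (rule integral_cong_AE)
    show "AE \<omega> in M. Dinf \<omega> = 1 + (\<Sum>k. Inc k \<omega>)"
      using AE_good by eventually_elim (simp add: good_Dinf)
  qed (use iS in auto)
  also have "\<dots> = 1" using iS e0 by (simp add: P.prob_space)
  finally show ?thesis .
qed

lemma sq_diff: "\<bar>u\<^sup>2 - v\<^sup>2\<bar> \<le> (u - v)\<^sup>2 / (2 * c) + c * (u\<^sup>2 + v\<^sup>2)" if "c > 0" for u v c :: real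
proof -
  have "\<bar>u\<^sup>2 - v\<^sup>2\<bar> = \<bar>(u - v) * (u + v)\<bar>" by (simp add: power2_eq_square algebra_simps)
  also have "\<dots> \<le> ((u - v)\<^sup>2 / c + c * (u + v)\<^sup>2) / 2" by (rule amgm[OF that])
  also have "(u + v)\<^sup>2 \<le> 2 * (u\<^sup>2 + v\<^sup>2)"
  proof -
    have e: "2 * (u\<^sup>2 + v\<^sup>2) - (u + v)\<^sup>2 = (u - v)\<^sup>2" by (simp add: power2_eq_square algebra_simps)
    have "0 \<le> (u - v)\<^sup>2" by simp
    then show ?thesis using e by linarith
  qed
  then have "((u - v)\<^sup>2 / c + c * (u + v)\<^sup>2) / 2 \<le> ((u - v)\<^sup>2 / c + c * (2 * (u\<^sup>2 + v\<^sup>2))) / 2"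
    using that by (intro divide_right_mono add_left_mono mult_left_mono) auto
  also have "\<dots> = (u - v)\<^sup>2 / (2 * c) + c * (u\<^sup>2 + v\<^sup>2)" by (simp add: field_simps)
  finally show ?thesis .
qed

lemma L1_sq: "(\<lambda>t. \<integral>\<omega>. \<bar>(DD t \<omega>)\<^sup>2 - (Dinf \<omega>)\<^sup>2\<bar> \<partial>M) \<longlonglongrightarrow> 0"
proof (rule tendsto_sandwich[of "\<lambda>t. 0" _ _ "\<lambda>t. Kc / 2 * (\<rho> / q) ^ t + q ^ t * (KD + (\<integral>\<omega>. (Dinf \<omega>)\<^sup>2 \<partial>M))"])
  show "\<forall>\<^sub>F t in sequentially. 0 \<le> (\<integral>\<omega>. \<bar>(DD t \<omega>)\<^sup>2 - (Dinf \<omega>)\<^sup>2\<bar> \<partial>M)" by simp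
  show "\<forall>\<^sub>F t in sequentially. (\<integral>\<omega>. \<bar>(DD t \<omega>)\<^sup>2 - (Dinf \<omega>)\<^sup>2\<bar> \<partial>M) \<le> Kc / 2 * (\<rho> / q) ^ t + q ^ t * (KD + (\<integral>\<omega>. (Dinf \<omega>)\<^sup>2 \<partial>M))"
  proof (intro always_eventually allI)
    fix t
    have qt: "q ^ t > 0" using q_pos by simp
    have iB: "integrable M (\<lambda>\<omega>. (DD t \<omega> - Dinf \<omega>)\<^sup>2 / (2 * q ^ t) + q ^ t * ((DD t \<omega>)\<^sup>2 + (Dinf \<omega>)\<^sup>2))"
      using L2_tail[of t] DD2(1)[of t] int_Dinf2 by simp
    have iA: "integrable M (\<lambda>\<omega>. \<bar>(DD t \<omega>)\<^sup>2 - (Dinf \<omega>)\<^sup>2\<bar>)"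
    proof (rule Bochner_Integration.integrable_bound)
      show "integrable M (\<lambda>\<omega>. (DD t \<omega>)\<^sup>2 + (Dinf \<omega>)\<^sup>2)" using DD2(1)[of t] int_Dinf2 by simp
      show "AE \<omega> in M. norm \<bar>(DD t \<omega>)\<^sup>2 - (Dinf \<omega>)\<^sup>2\<bar> \<le> norm ((DD t \<omega>)\<^sup>2 + (Dinf \<omega>)\<^sup>2)"
      proof (rule AE_I2)
        fix \<omega>
        have "0 \<le> (DD t \<omega>)\<^sup>2" "0 \<le> (Dinf \<omega>)\<^sup>2" by simp_all
        then show "norm \<bar>(DD t \<omega>)\<^sup>2 - (Dinf \<omega>)\<^sup>2\<bar> \<le> norm ((DD t \<omega>)\<^sup>2 + (Dinf \<omega>)\<^sup>2)"
          by (simp only: real_norm_def abs_abs)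
      qed
    qed measurable
    have "(\<integral>\<omega>. \<bar>(DD t \<omega>)\<^sup>2 - (Dinf \<omega>)\<^sup>2\<bar> \<partial>M) \<le>
          (\<integral>\<omega>. (DD t \<omega> - Dinf \<omega>)\<^sup>2 / (2 * q ^ t) + q ^ t * ((DD t \<omega>)\<^sup>2 + (Dinf \<omega>)\<^sup>2) \<partial>M)"
      by (rule integral_mono[OF iA iB]) (rule sq_diff[OF qt])
    also have "\<dots> = (\<integral>\<omega>. (DD t \<omega> - Dinf \<omega>)\<^sup>2 \<partial>M) / (2 * q ^ t) + q ^ t * ((\<integral>\<omega>. (DD t \<omega>)\<^sup>2 \<partial>M) + (\<integral>\<omega>. (Dinf \<omega>)\<^sup>2 \<partial>M))"
      using L2_tail[of t] DD2(1)[of t] int_Dinf2 by simp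
    also have "\<dots> \<le> Kc * \<rho> ^ t / (2 * q ^ t) + q ^ t * (KD + (\<integral>\<omega>. (Dinf \<omega>)\<^sup>2 \<partial>M))"
      using L2_tail[of t] DD2(2)[of t] qt by (intro add_mono mult_left_mono divide_right_mono) auto
    also have "Kc * \<rho> ^ t / (2 * q ^ t) = Kc / 2 * (\<rho> / q) ^ t" by (simp add: power_divide)
    finally show "(\<integral>\<omega>. \<bar>(DD t \<omega>)\<^sup>2 - (Dinf \<omega>)\<^sup>2\<bar> \<partial>M) \<le> Kc / 2 * (\<rho> / q) ^ t + q ^ t * (KD + (\<integral>\<omega>. (Dinf \<omega>)\<^sup>2 \<partial>M))" .
  qed
  show "(\<lambda>t. Kc / 2 * (\<rho> / q) ^ t + q ^ t * (KD + (\<integral>\<omega>. (Dinf \<omega>)\<^sup>2 \<partial>M))) \<longlonglongrightarrow> 0"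
  proof -
    have "(\<lambda>t. Kc / 2 * (\<rho> / q) ^ t + q ^ t * (KD + (\<integral>\<omega>. (Dinf \<omega>)\<^sup>2 \<partial>M))) \<longlonglongrightarrow> Kc / 2 * 0 + 0 * (KD + (\<integral>\<omega>. (Dinf \<omega>)\<^sup>2 \<partial>M))"
      using rq_pos rq_lt1 q_pos q_lt1 rho_pos
      by (intro tendsto_add tendsto_mult tendsto_const LIMSEQ_power_zero) auto
    then show ?thesis by simp
  qed
qed simp

end

theorem lemma5p3:
  fixes d :: nat and a b :: real
    and M :: "'w measure" and W :: "nat \<Rightarrow> 'w \<Rightarrow> nat \<times> nat"
  assumes "d \<ge> 3" and "a \<ge> b" and "b > 0"
    and "is_gw_count_process d a b M W"
  defines "\<alpha> \<equiv> gw_alpha d a b" and "\<beta> \<equiv> gw_beta d a b"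
  defines "G \<equiv> gen_filtration M W"
  defines "Mt \<equiv> (\<lambda>t \<omega>. (real (fst (W t \<omega>)) + real (snd (W t \<omega>))) / \<alpha> ^ t)"
  defines "Dt \<equiv> (\<lambda>t \<omega>. (real (fst (W t \<omega>)) - real (snd (W t \<omega>))) / \<beta> ^ t)"
  shows "martingale M G Mt \<and>
         (a > b \<longrightarrow> martingale M G Dt) \<and>
         (\<beta>\<^sup>2 > \<alpha> \<and> \<alpha> > 1 \<longrightarrow>
           uniformly_integrable M Mt \<and> uniformly_integrable M Dt \<and>
           (\<exists>Dinf \<in> borel_measurable M.
              (AE \<omega> in M. (\<lambda>t. Dt t \<omega>) \<longlonglongrightarrow> Dinf \<omega>) \<and>
              integrable M (\<lambda>\<omega>. (Dinf \<omega>)\<^sup>2) \<and>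
              (\<lambda>t. \<integral>\<omega>. (Dt t \<omega> - Dinf \<omega>)\<^sup>2 \<partial>M) \<longlonglongrightarrow> 0 \<and>
              (\<integral>\<omega>. Dinf \<omega> \<partial>M) = 1 \<and>
              (\<lambda>t. \<integral>\<omega>. \<bar>(Dt t \<omega>)\<^sup>2 - (Dinf \<omega>)\<^sup>2\<bar> \<partial>M) \<longlonglongrightarrow> 0))"
proof -
  obtain n where d: "d = Suc n" using assms(1) by (cases d) auto
  have n2: "n \<ge> 2" using assms(1) d by simp
  interpret gwp n a b M W
    using assms n2 d by unfold_locales auto
  have al: "\<alpha> = gw_alpha (Suc n) a b" and be: "\<beta> = gw_beta (Suc n) a b" by (simp_all add: \<alpha>_def \<beta>_def d)
  have m1: "martingale M G Mt" unfolding Mt_def G_def al by (rule mart_M)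
  have m2: "a > b \<longrightarrow> martingale M G Dt"
  proof
    assume "a > b"
    then have "gw_beta (Suc n) a b \<noteq> 0" using n2 by (simp add: beta_eq)
    then show "martingale M G Dt" unfolding Dt_def G_def be by (rule mart_D)
  qed
  have m3: "\<beta>\<^sup>2 > \<alpha> \<and> \<alpha> > 1 \<longrightarrow>
           uniformly_integrable M Mt \<and> uniformly_integrable M Dt \<and>
           (\<exists>Dinf \<in> borel_measurable M.
              (AE \<omega> in M. (\<lambda>t. Dt t \<omega>) \<longlonglongrightarrow> Dinf \<omega>) \<and>
              integrable M (\<lambda>\<omega>. (Dinf \<omega>)\<^sup>2) \<and>
              (\<lambda>t. \<integral>\<omega>. (Dt t \<omega> - Dinf \<omega>)\<^sup>2 \<partial>M) \<longlonglongrightarrow> 0 \<and>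
              (\<integral>\<omega>. Dinf \<omega> \<partial>M) = 1 \<and>
              (\<lambda>t. \<integral>\<omega>. \<bar>(Dt t \<omega>)\<^sup>2 - (Dinf \<omega>)\<^sup>2\<bar> \<partial>M) \<longlonglongrightarrow> 0)"
  proof
    assume h: "\<beta>\<^sup>2 > \<alpha> \<and> \<alpha> > 1"
    interpret gwc n a b M W
      using h by unfold_locales (simp add: al be)
    have Dt_eq: "Dt = DD" unfolding Dt_def be by (simp add: fun_eq_iff DD_lit)
    have uM: "uniformly_integrable M Mt"
    proof (rule UI_L2)
      fix t
      show "integrable M (Mt t)" unfolding Mt_def al using int_S[of t] by (simp add: Sr_fun)
      show "integrable M (\<lambda>\<omega>. (Mt t \<omega>)\<^sup>2)" unfolding Mt_def al using MM_L2(1) h al by simp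
      show "(\<integral>\<omega>. (Mt t \<omega>)\<^sup>2 \<partial>M) \<le> 1 + C1 / (gw_alpha (Suc n) a b)\<^sup>2 * (1 / (1 - 1 / gw_alpha (Suc n) a b))"
        unfolding Mt_def al using MM_L2(2) h al by simp
    qed
    have uD: "uniformly_integrable M Dt"
      unfolding Dt_eq by (rule UI_L2[OF int_DD DD2(1) DD2(2)])
    show "uniformly_integrable M Mt \<and> uniformly_integrable M Dt \<and>
           (\<exists>Dinf \<in> borel_measurable M.
              (AE \<omega> in M. (\<lambda>t. Dt t \<omega>) \<longlonglongrightarrow> Dinf \<omega>) \<and>
              integrable M (\<lambda>\<omega>. (Dinf \<omega>)\<^sup>2) \<and>
              (\<lambda>t. \<integral>\<omega>. (Dt t \<omega> - Dinf \<omega>)\<^sup>2 \<partial>M) \<longlonglongrightarrow> 0 \<and>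
              (\<integral>\<omega>. Dinf \<omega> \<partial>M) = 1 \<and>
              (\<lambda>t. \<integral>\<omega>. \<bar>(Dt t \<omega>)\<^sup>2 - (Dinf \<omega>)\<^sup>2\<bar> \<partial>M) \<longlonglongrightarrow> 0)"
      unfolding Dt_eq
      using uM uD[unfolded Dt_eq] Dinf_meas AE_conv int_Dinf2 L2_lim E_Dinf L1_sq by blast
  qed
  show ?thesis using m1 m2 m3 by blast
qed


end
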